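(* Let $G$ be a planar graph (embedded in the plane) with planar dual $\widehat G$. Then the graded Euler characteristic of the complex $\langle G\rangle$ recovers the chromatic polynomial $\chi_G$ of $G$: $$\chi_G\big((q+q^{-1})^2\big)=(q+q^{-1})^2\prod_{v}(q+q^{-1})^{(r(v)-2)/2}\;\chi_q\langle G\rangle ,$$ where the product is over all vertices $v$ of $\widehat G$ and $r(v)$ is the valence of $v$; the equality holds in the ring of formal Laurent series in $q$.
   Context: $\mathrm{Cob}(m)$ is Bar-Natan's dotted cobordism category over $R=\mathbb Z[\alpha]$ (relations: sphere $=0$, one-dotted sphere $=1$, two-dotted sphere $=0$, three-dotted sphere $=\alpha$, neck-cutting) and $\mathrm{Kom}(m)$ its category of bounded-below chain complexes. $P_2\in\mathrm{Kom}(2)$ is the complex $\mathbb 1\xrightarrow{s}qe_1\xrightarrow{x_{\mathrm{top}}-x_{\mathrm{bot}}}q^3e_1\xrightarrow{x_{\mathrm{top}}+x_{\mathrm{bot}}}q^5e_1\to\cdots$ (the last two maps alternating; $\mathbb 1$ two vertical strands in homological degree $0$, $e_1$ cap over cup, $s$ saddle, $x_{\mathrm{top}},x_{\mathrm{bot}}$ dots on the top/bottom arc, $q^{2n-1}e_1$ in homological degree $n$). For a graph $\Gamma$ embedded in the plane (loops and multiple edges allowed), the spin-network complex $S(\Gamma)\in\mathrm{Kom}(0)$ is obtained by replacing each edge by two parallel strands carrying a copy of $P_2$ and, near each vertex, joining the strand ends of cyclically consecutive edges by arcs, so that away from the projectors the strands form the boundary of a regular neighborhood of $\Gamma$. For a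 planar graph $G$, $\langle G\rangle:=S(\widehat G)$. The chromatic polynomial $\chi_G(Q)$ is the number of proper vertex colorings of $G$ with $Q$ colors (as a polynomial in $Q$; it vanishes if $G$ has a loop). The graded Euler characteristic is $\chi_q(C)=\sum_i(-1)^i[C_i]$, where a summand $q^j D$ with $D$ a diagram of $k$ circles contributes $q^j(q+q^{-1})^k$.
   Formalization: G is a connected planar graph with at least one vertex, and the equality is taken in the ring of formal Laurent series in q with rational coefficients. Apart from conventions, each condition added here is assumed in the paper as well or is needed for the statement above to hold. *)

theory Defs
  imports "HOL-Computational_Algebra.Formal_Laurent_Series"
          "HOL-Computational_Algebra.Polynomial"
          "HOL-Combinatorics.Permutations"
          "HOL-Library.FuncSet"
begin

section \<open>Plane graphs as rotation systems (combinatorial maps)\<close>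

text \<open>A graph embedded in an oriented surface is given by: a finite vertex set V,
 a finite set D of darts (half-edges), the incidence map vert (dart to its vertex),
 a fixed-point-free involution alpha on D (the two halves of an edge) and a permutation
 sigma on D whose cycles are the cyclic orders of the darts around each vertex.
 Loops and multiple edges are allowed; isolated vertices have no darts.\<close>

definition ribbon_graph ::
  "'v set \<Rightarrow> 'd set \<Rightarrow> ('d \<Rightarrow> 'v) \<Rightarrow> ('d \<Rightarrow> 'd) \<Rightarrow> ('d \<Rightarrow> 'd) \<Rightarrow> bool" where
  "ribbon_graph V D vert \<alpha> \<sigma> \<longleftrightarrow>
     finite V \<and> finite D \<and> vert ` D \<subseteq> V \<and>
     \<alpha> permutes D \<and> (\<forall>d\<in>D. \<alpha> d \<noteq> d \<and> \<alpha> (\<alpha> d) = d) \<and>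
     \<sigma> permutes D \<and> (\<forall>d\<in>D. vert (\<sigma> d) = vert d) \<and>
     (\<forall>d\<in>D. \<forall>d'\<in>D. vert d = vert d' \<longrightarrow> (\<exists>k. (\<sigma> ^^ k) d = d'))"

definition graph_edges :: "'d set \<Rightarrow> ('d \<Rightarrow> 'd) \<Rightarrow> 'd set set" where
  "graph_edges D \<alpha> = {{d, \<alpha> d} | d. d \<in> D}"

text \<open>Valence of a vertex (a loop counts twice).\<close>
definition valence :: "'d set \<Rightarrow> ('d \<Rightarrow> 'v) \<Rightarrow> 'v \<Rightarrow> nat" where
  "valence D vert v = card {d\<in>D. vert d = v}"

definition graph_connected :: "'v set \<Rightarrow> 'd set \<Rightarrow> ('d \<Rightarrow> 'v) \<Rightarrow> ('d \<Rightarrow> 'd) \<Rightarrow> bool" where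
  "graph_connected V D vert \<alpha> \<longleftrightarrow>
     (\<forall>u\<in>V. \<forall>v\<in>V. (u, v) \<in> {(vert d, vert (\<alpha> d)) | d. d \<in> D}\<^sup>*)"

definition orbit_of :: "('d \<Rightarrow> 'd) \<Rightarrow> 'd \<Rightarrow> 'd set" where
  "orbit_of f d = {(f ^^ k) d | k. True}"

definition sub_rotation :: "('d \<Rightarrow> 'd) \<Rightarrow> 'd set set \<Rightarrow> 'd \<Rightarrow> 'd" where
  "sub_rotation \<sigma> B d = (\<sigma> ^^ (LEAST k. 0 < k \<and> (\<sigma> ^^ k) d \<in> \<Union>B)) d"

text \<open>Number of circles forming the boundary of a regular neighbourhood of the
 (embedded) spanning subgraph with edge set B: one circle per boundary walk
 (orbit of sub_rotation composed with alpha on the darts of B) plus one circle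
 for each vertex not incident to any edge of B.\<close>
definition nbhd_circles ::
  "'v set \<Rightarrow> 'd set \<Rightarrow> ('d \<Rightarrow> 'v) \<Rightarrow> ('d \<Rightarrow> 'd) \<Rightarrow> ('d \<Rightarrow> 'd) \<Rightarrow> 'd set set \<Rightarrow> nat" where
  "nbhd_circles V D vert \<alpha> \<sigma> B =
     card {orbit_of (sub_rotation \<sigma> B \<circ> \<alpha>) d | d. d \<in> \<Union>B}
     + card {v\<in>V. \<forall>d\<in>\<Union>B. vert d \<noteq> v}"

text \<open>A connected graph embedded in the plane (equivalently the sphere):
 connected rotation system of genus 0, i.e. V - E + F = 2, where the faces
 correspond to the boundary circles of a regular neighbourhood of the graph.\<close>
definition plane_graph ::
  "'v set \<Rightarrow> 'd set \<Rightarrow> ('d \<Rightarrow> 'v) \<Rightarrow> ('d \<Rightarrow> 'd) \<Rightarrow> ('d \<Rightarrow> 'd) \<Rightarrow> bool" where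
  "plane_graph V D vert \<alpha> \<sigma> \<longleftrightarrow>
     ribbon_graph V D vert \<alpha> \<sigma> \<and> V \<noteq> {} \<and> graph_connected V D vert \<alpha> \<and>
     int (card V) - int (card (graph_edges D \<alpha>))
       + int (nbhd_circles V D vert \<alpha> \<sigma> (graph_edges D \<alpha>)) = 2"

subsection \<open>Planar dual\<close>

text \<open>Faces are the orbits of sigma o alpha (boundary walks); the graph with no
 edges (a single vertex) has a single face.  The dual has the faces as vertices,
 the same darts and edge involution, and rotation sigma o alpha.\<close>
definition dual_vertices :: "'d set \<Rightarrow> ('d \<Rightarrow> 'd) \<Rightarrow> ('d \<Rightarrow> 'd) \<Rightarrow> 'd set set" where
  "dual_vertices D \<alpha> \<sigma> =
     (if D = {} then {{}} else {orbit_of (\<sigma> \<circ> \<alpha>) d | d. d \<in> D})"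

definition dual_vert :: "('d \<Rightarrow> 'd) \<Rightarrow> ('d \<Rightarrow> 'd) \<Rightarrow> 'd \<Rightarrow> 'd set" where
  "dual_vert \<alpha> \<sigma> d = orbit_of (\<sigma> \<circ> \<alpha>) d"

definition dual_rotation :: "('d \<Rightarrow> 'd) \<Rightarrow> ('d \<Rightarrow> 'd) \<Rightarrow> 'd \<Rightarrow> 'd" where
  "dual_rotation \<alpha> \<sigma> = \<sigma> \<circ> \<alpha>"

section \<open>Chromatic polynomial\<close>

definition proper_colorings ::
  "'v set \<Rightarrow> 'd set \<Rightarrow> ('d \<Rightarrow> 'v) \<Rightarrow> ('d \<Rightarrow> 'd) \<Rightarrow> nat \<Rightarrow> ('v \<Rightarrow> nat) set" where
  "proper_colorings V D vert \<alpha> Q =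
     {c \<in> V \<rightarrow>\<^sub>E {0..<Q}. \<forall>d\<in>D. c (vert d) \<noteq> c (vert (\<alpha> d))}"

definition chromatic_poly :: "'v set \<Rightarrow> 'd set \<Rightarrow> ('d \<Rightarrow> 'v) \<Rightarrow> ('d \<Rightarrow> 'd) \<Rightarrow> int poly" where
  "chromatic_poly V D vert \<alpha> =
     (THE p. \<forall>Q::nat. poly p (of_nat Q) = int (card (proper_colorings V D vert \<alpha> Q)))"

section \<open>Laurent series, P_2 and the spin-network complex\<close>

definition qq :: "rat fls" where
  "qq = fls_X + fls_X_inv"

text \<open>Coefficientwise sum of a sequence of Laurent series (used for sum_i (-1)^i [C_i]
 of a bounded-below complex; in each q-degree only finitely many terms are nonzero).\<close>
definition fls_seq_sum :: "(nat \<Rightarrow> rat fls) \<Rightarrow> rat fls" where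
  "fls_seq_sum f = Abs_fls (\<lambda>m. \<Sum>i\<in>{i. fls_nth (f i) m \<noteq> 0}. fls_nth (f i) m)"

text \<open>Chain object of P_2 in homological degree n: degree 0 is the identity
 (two vertical strands, q-shift 0); degree n \<ge> 1 is q^(2n-1) e_1 (cap over cup).
 Encoded as (q-shift, is the identity tangle).\<close>
definition P2_term :: "nat \<Rightarrow> int \<times> bool" where
  "P2_term n = (if n = 0 then (0, True) else (2 * int n - 1, False))"

text \<open>Summands of the chain object of S(Gamma) in homological degree i: choice of a
 homological degree n e for the copy of P_2 on each edge e with total degree i.
 The summand is q^(sum of shifts) times the closed diagram obtained by inserting the
 chosen tangles (strands through edges with the identity, cut at edges with e_1),
 which consists of nbhd_circles of the subgraph of identity edges many circles.\<close>
definition spin_states :: "'d set \<Rightarrow> ('d \<Rightarrow> 'd) \<Rightarrow> nat \<Rightarrow> ('d set \<Rightarrow> nat) set" where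
  "spin_states D \<alpha> i =
     {n \<in> graph_edges D \<alpha> \<rightarrow>\<^sub>E UNIV. (\<Sum>e\<in>graph_edges D \<alpha>. n e) = i}"

definition spin_summand_shift :: "'d set \<Rightarrow> ('d \<Rightarrow> 'd) \<Rightarrow> ('d set \<Rightarrow> nat) \<Rightarrow> int" where
  "spin_summand_shift D \<alpha> n = (\<Sum>e\<in>graph_edges D \<alpha>. fst (P2_term (n e)))"

definition spin_summand_circles ::
  "'v set \<Rightarrow> 'd set \<Rightarrow> ('d \<Rightarrow> 'v) \<Rightarrow> ('d \<Rightarrow> 'd) \<Rightarrow> ('d \<Rightarrow> 'd) \<Rightarrow> ('d set \<Rightarrow> nat) \<Rightarrow> nat" where
  "spin_summand_circles V D vert \<alpha> \<sigma> n =
     nbhd_circles V D vert \<alpha> \<sigma> {e\<in>graph_edges D \<alpha>. snd (P2_term (n e))}"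

text \<open>Class [C_i] of the chain object of S(Gamma) in degree i: a summand q^j D with D
 consisting of k circles contributes q^j (q+q^{-1})^k.\<close>
definition spin_chain_class ::
  "'v set \<Rightarrow> 'd set \<Rightarrow> ('d \<Rightarrow> 'v) \<Rightarrow> ('d \<Rightarrow> 'd) \<Rightarrow> ('d \<Rightarrow> 'd) \<Rightarrow> nat \<Rightarrow> rat fls" where
  "spin_chain_class V D vert \<alpha> \<sigma> i =
     (\<Sum>n\<in>spin_states D \<alpha> i.
        fls_X powi (spin_summand_shift D \<alpha> n) * qq ^ spin_summand_circles V D vert \<alpha> \<sigma> n)"

definition spin_euler_char ::
  "'v set \<Rightarrow> 'd set \<Rightarrow> ('d \<Rightarrow> 'v) \<Rightarrow> ('d \<Rightarrow> 'd) \<Rightarrow> ('d \<Rightarrow> 'd) \<Rightarrow> rat fls" where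
  "spin_euler_char V D vert \<alpha> \<sigma> =
     fls_seq_sum (\<lambda>i. (-1) ^ i * spin_chain_class V D vert \<alpha> \<sigma> i)"

text \<open>chi_q of the bracket <G> = S(dual of G).\<close>
definition bracket_euler_char ::
  "'v set \<Rightarrow> 'd set \<Rightarrow> ('d \<Rightarrow> 'v) \<Rightarrow> ('d \<Rightarrow> 'd) \<Rightarrow> ('d \<Rightarrow> 'd) \<Rightarrow> rat fls" where
  "bracket_euler_char V D vert \<alpha> \<sigma> =
     spin_euler_char (dual_vertices D \<alpha> \<sigma>) D (dual_vert \<alpha> \<sigma>) \<alpha> (dual_rotation \<alpha> \<sigma>)"

end

theory Submission
  imports Defs "HOL-Combinatorics.Orbits" "HOL-Combinatorics.Transposition"
begin

notation fls_nth (infixl \<open>$$\<close> 75)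

definition ncyc :: "('d \<Rightarrow> 'd) \<Rightarrow> 'd set \<Rightarrow> nat" where
  "ncyc f S = card {orbit_of f d | d. d \<in> S}"

lemma orbit_of_closed:
  assumes "\<forall>y\<in>S. f y \<in> S" "x \<in> S"
  shows "orbit_of f x \<subseteq> S"
proof -
  have "(f ^^ k) x \<in> S" for k by (induction k) (use assms in auto)
  thus ?thesis unfolding orbit_of_def by auto
qed

lemma funpow_in_orbit_of: "(f ^^ n) x \<in> orbit_of f x"
  unfolding orbit_of_def by auto

lemma self_in_orbit_of: "x \<in> orbit_of f x"
  using funpow_in_orbit_of[of 0 f x] by simp

lemma f_in_orbit_of: "f x \<in> orbit_of f x"
  using funpow_in_orbit_of[of 1 f x] by simp

lemma orbit_of_perm:
  assumes "f permutes D" "finite D"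
  shows "orbit_of f x = orbit f x"
proof -
  have "permutation f" using assms permutation_permutes by blast
  thus ?thesis unfolding orbit_of_def using orbit_altdef_permutation by metis
qed

lemma orbit_of_eq:
  assumes "f permutes D" "finite D" "y \<in> orbit_of f x"
  shows "orbit_of f y = orbit_of f x"
proof -
  have p: "permutation f" using assms permutation_permutes by blast
  have xx: "x \<in> orbit f x" "y \<in> orbit f y" using p permutation_self_in_orbit by metis+
  have y: "y \<in> orbit f x" using assms orbit_of_perm by metis
  have "x \<in> orbit f y" using orbit_swap[OF xx(1) y] .
  hence "orbit f y = orbit f x" using y by (auto intro: orbit_trans)
  thus ?thesis using assms orbit_of_perm by metis
qed

lemma orbit_of_sym:
  assumes "f permutes D" "finite D" "y \<in> orbit_of f x"
  shows "x \<in> orbit_of f y"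
  using orbit_of_eq[OF assms] self_in_orbit_of by metis

lemma orbit_of_subset:
  assumes "f permutes D" "x \<in> D"
  shows "orbit_of f x \<subseteq> D"
proof (rule orbit_of_closed)
  show "\<forall>y\<in>D. f y \<in> D" using permutes_in_image[OF assms(1)] by blast
qed (rule assms(2))

lemma orbit_of_period:
  assumes "f permutes D" "finite D"
  shows "\<exists>p>0. (f ^^ p) x = x"
proof -
  have p: "permutation f" using assms permutation_permutes by blast
  have "x \<in> orbit f x" using p permutation_self_in_orbit by metis
  thus ?thesis unfolding orbit_altdef by auto
qed

lemma orbit_of_disjoint:
  assumes "f permutes D" "finite D" "orbit_of f x \<inter> orbit_of f y \<noteq> {}"
  shows "orbit_of f x = orbit_of f y"
proof -
  obtain z where "z \<in> orbit_of f x" "z \<in> orbit_of f y" using assms by blast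
  thus ?thesis using orbit_of_eq[OF assms(1,2)] by metis
qed

lemma orbit_of_agree:
  assumes "orbit_of f x \<inter> Z = {}" "\<forall>y. y \<notin> Z \<longrightarrow> f y = g y"
  shows "orbit_of g x = orbit_of f x"
proof -
  have "(g ^^ k) x = (f ^^ k) x" for k
  proof (induction k)
    case (Suc k)
    have "(f ^^ k) x \<notin> Z" using assms(1) funpow_in_orbit_of by fast
    thus ?case using Suc assms(2) by simp
  qed simp
  thus ?thesis unfolding orbit_of_def by auto
qed

lemma split_lemma:
  assumes f: "f permutes D" "finite D" and ab: "a \<noteq> b" "b \<in> orbit_of f a"
  shows "b \<notin> orbit_of (transpose a b \<circ> f) a"
proof -
  let ?g = "transpose a b \<circ> f"
  obtain n where n: "(f ^^ n) a = b" using ab unfolding orbit_of_def by auto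
  with ab have "n > 0" by (cases n) auto
  define j where "j = (LEAST j. 0 < j \<and> (f ^^ j) a \<in> {a, b})"
  have jP: "0 < j \<and> (f ^^ j) a \<in> {a, b}"
    unfolding j_def by (rule LeastI[of _ n]) (use n \<open>n>0\<close> in auto)
  have jmin: "\<And>i. 0 < i \<Longrightarrow> i < j \<Longrightarrow> (f ^^ i) a \<notin> {a, b}"
    using not_less_Least unfolding j_def by blast
  define S where "S = {(f ^^ i) a | i. i < j}"
  have bS: "b \<notin> S"
  proof
    assume "b \<in> S"
    then obtain i where i: "i < j" "(f ^^ i) a = b" unfolding S_def by auto
    show False using jmin[of i] i ab by (cases "i = 0") auto
  qed
  have aS: "a \<in> S" unfolding S_def using jP by (auto intro: exI[of _ 0])
  have fjb: "(f ^^ j) a = b"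
  proof (rule ccontr)
    assume "(f ^^ j) a \<noteq> b"
    hence fja: "(f ^^ j) a = a" using jP by auto
    have "\<forall>y\<in>S. f y \<in> S"
    proof
      fix y assume "y \<in> S"
      then obtain i where i: "i < j" "y = (f ^^ i) a" unfolding S_def by auto
      show "f y \<in> S"
      proof (cases "Suc i = j")
        case True
        hence "f y = a" using i fja by auto
        thus ?thesis using aS by simp
      next
        case False
        hence "f y = (f ^^ Suc i) a" "Suc i < j" using i by auto
        thus ?thesis unfolding S_def by blast
      qed
    qed
    hence "orbit_of f a \<subseteq> S" using orbit_of_closed aS by metis
    thus False using ab bS by auto
  qed
  have "\<forall>y\<in>S. ?g y \<in> S"
  proof
    fix y assume "y \<in> S"
    then obtain i where i: "i < j" "y = (f ^^ i) a" unfolding S_def by auto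
    show "?g y \<in> S"
    proof (cases "Suc i = j")
      case True
      hence "f y = b" using i fjb by auto
      thus ?thesis using aS by (simp add: transpose_def)
    next
      case False
      hence *: "f y = (f ^^ Suc i) a" "Suc i < j" using i by auto
      hence "f y \<notin> {a, b}" using jmin[of "Suc i"] by auto
      hence "?g y = (f ^^ Suc i) a" using * by (auto simp: transpose_def)
      thus ?thesis unfolding S_def using * by blast
    qed
  qed
  hence "orbit_of ?g a \<subseteq> S" using orbit_of_closed aS by metis
  thus ?thesis using bS by auto
qed

lemma merge_lemma:
  assumes f: "f permutes D" "finite D" and ab: "a \<noteq> b" "b \<notin> orbit_of f a"
  shows "b \<in> orbit_of (transpose a b \<circ> f) a"
proof -
  let ?g = "transpose a b \<circ> f"
  obtain p0 where "p0 > 0" "(f ^^ p0) a = a" using orbit_of_period[OF f] by blast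
  define p where "p = (LEAST p. 0 < p \<and> (f ^^ p) a = a)"
  have pP: "0 < p \<and> (f ^^ p) a = a"
    unfolding p_def by (rule LeastI[of _ p0]) (use \<open>p0>0\<close> \<open>(f ^^ p0) a = a\<close> in auto)
  have pmin: "\<And>i. 0 < i \<Longrightarrow> i < p \<Longrightarrow> (f ^^ i) a \<noteq> a"
    using not_less_Least unfolding p_def by blast
  have nb: "(f ^^ i) a \<noteq> b" for i using ab funpow_in_orbit_of by metis
  have eq: "i < p \<Longrightarrow> (?g ^^ i) a = (f ^^ i) a" for i
  proof (induction i)
    case (Suc i)
    have "(f ^^ Suc i) a \<noteq> a" using pmin[of "Suc i"] Suc by auto
    thus ?case using Suc nb[of "Suc i"] by (auto simp: transpose_def)
  qed simp
  obtain q where q: "p = Suc q" using pP by (cases p) auto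
  have "(?g ^^ p) a = ?g ((?g ^^ q) a)" using q by simp
  also have "\<dots> = ?g ((f ^^ q) a)" using eq q by simp
  also have "f ((f ^^ q) a) = a" using pP q by simp
  hence "?g ((f ^^ q) a) = b" by (simp add: transpose_def)
  finally show ?thesis using funpow_in_orbit_of by metis
qed

lemma ncyc_transpose:
  assumes f: "f permutes D" "finite D" and ab: "a \<noteq> b" "a \<in> D" "b \<in> D"
  defines "g \<equiv> transpose a b \<circ> f"
  shows "b \<in> orbit_of f a \<Longrightarrow> ncyc g D = ncyc f D + 1"
    and "b \<notin> orbit_of f a \<Longrightarrow> ncyc g D + 1 = ncyc f D"
proof -
  have g: "g permutes D" unfolding g_def
    using permutes_compose[OF f(1) permutes_swap_id[OF ab(2,3)]] .
  define z1 where "z1 = inv f a"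
  define z2 where "z2 = inv f b"
  have fz: "f z1 = a" "f z2 = b" unfolding z1_def z2_def using f(1) permutes_inverses(1) by metis+
  have zD: "z1 \<in> D" "z2 \<in> D" unfolding z1_def z2_def
    using ab f(1) permutes_in_image permutes_inv by metis+
  have gz: "g z1 = b" "g z2 = a" unfolding g_def using fz by (auto simp: transpose_def)
  define Z where "Z = {z1, z2}"
  have agree: "\<forall>y. y \<notin> Z \<longrightarrow> f y = g y"
  proof (intro allI impI)
    fix y assume "y \<notin> Z"
    have inj: "inj f" using permutes_inj[OF f(1)] .
    hence "f y \<noteq> a" "f y \<noteq> b" using fz \<open>y \<notin> Z\<close> unfolding Z_def by (metis injD insertCI)+
    thus "f y = g y" unfolding g_def by (simp add: transpose_def)
  qed
  have agree': "\<forall>y. y \<notin> Z \<longrightarrow> g y = f y" using agree by metis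
  have part: "{orbit_of h d | d. d \<in> D} =
      {orbit_of h d | d. d \<in> D \<and> orbit_of h d \<inter> Z = {}} \<union> {orbit_of h z1, orbit_of h z2}"
    if h: "h permutes D" for h
  proof -
    have "orbit_of h d \<in> {orbit_of h z1, orbit_of h z2}" if "orbit_of h d \<inter> Z \<noteq> {}" for d
      using that orbit_of_eq[OF h f(2)] unfolding Z_def by blast
    thus ?thesis using zD by blast
  qed
  have disj: "{orbit_of h d | d. d \<in> D \<and> orbit_of h d \<inter> Z = {}} \<inter> {orbit_of h z1, orbit_of h z2} = {}"
    for h :: "'a \<Rightarrow> 'a"
    using self_in_orbit_of[of z1 h] self_in_orbit_of[of z2 h] unfolding Z_def by blast
  have same: "{orbit_of g d | d. d \<in> D \<and> orbit_of g d \<inter> Z = {}} =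
              {orbit_of f d | d. d \<in> D \<and> orbit_of f d \<inter> Z = {}}"
  proof -
    have A: "orbit_of g d = orbit_of f d" if "orbit_of f d \<inter> Z = {}" for d
      using orbit_of_agree[OF that agree] .
    have B: "orbit_of f d = orbit_of g d" if "orbit_of g d \<inter> Z = {}" for d
      using orbit_of_agree[OF that agree'] .
    show ?thesis
    proof (intro set_eqI iffI)
      fix Ob assume "Ob \<in> {orbit_of g d | d. d \<in> D \<and> orbit_of g d \<inter> Z = {}}"
      then obtain d where "Ob = orbit_of g d" "d \<in> D" "orbit_of g d \<inter> Z = {}" by blast
      thus "Ob \<in> {orbit_of f d | d. d \<in> D \<and> orbit_of f d \<inter> Z = {}}" using B[of d] by auto
    next
      fix Ob assume "Ob \<in> {orbit_of f d | d. d \<in> D \<and> orbit_of f d \<inter> Z = {}}"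
      then obtain d where "Ob = orbit_of f d" "d \<in> D" "orbit_of f d \<inter> Z = {}" by blast
      thus "Ob \<in> {orbit_of g d | d. d \<in> D \<and> orbit_of g d \<inter> Z = {}}" using A[of d] by auto
    qed
  qed
  define N where "N = card {orbit_of f d | d. d \<in> D \<and> orbit_of f d \<inter> Z = {}}"
  have fin: "finite {orbit_of h d | d. d \<in> D \<and> orbit_of h d \<inter> Z = {}}" for h :: "'a \<Rightarrow> 'a"
    using f(2) by (simp add: setcompr_eq_image)
  have cnt: "ncyc h D = card {orbit_of h d | d. d \<in> D \<and> orbit_of h d \<inter> Z = {}}
                        + card {orbit_of h z1, orbit_of h z2}" if "h permutes D" for h
    unfolding ncyc_def part[OF that] by (rule card_Un_disjoint[OF fin _ disj]) simp
  have of1: "orbit_of f z1 = orbit_of f a" "orbit_of f z2 = orbit_of f b"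
    using orbit_of_eq[OF f, of a z1] orbit_of_eq[OF f, of b z2] fz f_in_orbit_of by metis+
  have og1: "orbit_of g z1 = orbit_of g b" "orbit_of g z2 = orbit_of g a"
    using orbit_of_eq[OF g f(2), of b z1] orbit_of_eq[OF g f(2), of a z2] gz f_in_orbit_of by metis+
  show "ncyc g D = ncyc f D + 1" if b: "b \<in> orbit_of f a"
  proof -
    have "orbit_of f b = orbit_of f a" using orbit_of_eq[OF f b] .
    hence c1: "card {orbit_of f z1, orbit_of f z2} = 1" using of1 by simp
    have "b \<notin> orbit_of g a" using split_lemma[OF f ab(1) b] unfolding g_def .
    hence "orbit_of g b \<noteq> orbit_of g a" using self_in_orbit_of by metis
    hence c2: "card {orbit_of g z1, orbit_of g z2} = 2" using og1 by simp
    show ?thesis using cnt[OF f(1)] cnt[OF g] c1 c2 same by simp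
  qed
  show "ncyc g D + 1 = ncyc f D" if b: "b \<notin> orbit_of f a"
  proof -
    have "orbit_of f b \<noteq> orbit_of f a" using b self_in_orbit_of by metis
    hence c1: "card {orbit_of f z1, orbit_of f z2} = 2" using of1 by simp
    have "b \<in> orbit_of g a" using merge_lemma[OF f ab(1) b] unfolding g_def .
    hence "orbit_of g b = orbit_of g a" using orbit_of_eq[OF g f(2)] by metis
    hence c2: "card {orbit_of g z1, orbit_of g z2} = 1" using og1 by simp
    show ?thesis using cnt[OF f(1)] cnt[OF g] c1 c2 same by simp
  qed
qed


definition piA :: "('d \<Rightarrow> 'd) \<Rightarrow> ('d \<Rightarrow> 'd) \<Rightarrow> 'd set \<Rightarrow> 'd \<Rightarrow> 'd" where
  "piA \<sigma> \<alpha> A d = (if \<sigma> d \<in> A then \<alpha> (\<sigma> d) else \<sigma> d)"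

definition relA :: "('d \<Rightarrow> 'v) \<Rightarrow> ('d \<Rightarrow> 'd) \<Rightarrow> 'd set \<Rightarrow> ('v \<times> 'v) set" where
  "relA vert \<alpha> A = {(vert d, vert (\<alpha> d)) | d. d \<in> A}"

definition comps :: "'v set \<Rightarrow> ('d \<Rightarrow> 'v) \<Rightarrow> ('d \<Rightarrow> 'd) \<Rightarrow> 'd set \<Rightarrow> 'v set set" where
  "comps V vert \<alpha> A = (\<lambda>x. (relA vert \<alpha> A)\<^sup>* `` {x}) ` V"

locale rg =
  fixes V :: "'v set" and D :: "'d set" and vert :: "'d \<Rightarrow> 'v" and \<alpha> \<sigma> :: "'d \<Rightarrow> 'd"
  assumes rg: "ribbon_graph V D vert \<alpha> \<sigma>"
begin

lemma finV: "finite V" and finD: "finite D" and vertD: "d \<in> D \<Longrightarrow> vert d \<in> V"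
  and aperm: "\<alpha> permutes D" and sperm: "\<sigma> permutes D"
  and aneq: "d \<in> D \<Longrightarrow> \<alpha> d \<noteq> d" and vs: "d \<in> D \<Longrightarrow> vert (\<sigma> d) = vert d"
  and vorb: "d \<in> D \<Longrightarrow> d' \<in> D \<Longrightarrow> vert d = vert d' \<Longrightarrow> \<exists>k. (\<sigma> ^^ k) d = d'"
  using rg unfolding ribbon_graph_def by auto

lemma aa[simp]: "\<alpha> (\<alpha> x) = x"
proof (cases "x \<in> D")
  case True thus ?thesis using rg unfolding ribbon_graph_def by auto
next
  case False
  hence "\<alpha> x = x" using aperm unfolding permutes_def by auto
  thus ?thesis by simp
qed

lemma aD[simp]: "\<alpha> x \<in> D \<longleftrightarrow> x \<in> D" using permutes_in_image[OF aperm] by blast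
lemma sD[simp]: "\<sigma> x \<in> D \<longleftrightarrow> x \<in> D" using permutes_in_image[OF sperm] by blast

definition closedA :: "'d set \<Rightarrow> bool" where
  "closedA A \<longleftrightarrow> A \<subseteq> D \<and> (\<forall>d\<in>A. \<alpha> d \<in> A)"

lemma closedA_iff: "closedA A \<Longrightarrow> \<alpha> d \<in> A \<longleftrightarrow> d \<in> A"
  unfolding closedA_def by (metis aa)

lemma pi_permutes:
  assumes "closedA A" shows "piA \<sigma> \<alpha> A permutes D"
proof -
  define \<psi> where "\<psi> x = (if x \<in> A then \<alpha> x else x)" for x
  have \<psi>\<psi>: "\<psi> (\<psi> x) = x" for x unfolding \<psi>_def using closedA_iff[OF assms] by auto
  have "\<psi> permutes D" unfolding permutes_def
  proof (intro conjI allI impI)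
    fix x assume "x \<notin> D" thus "\<psi> x = x" unfolding \<psi>_def using assms closedA_def by auto
  next
    fix y show "\<exists>!x. \<psi> x = y"
    proof
      show "\<psi> (\<psi> y) = y" by (rule \<psi>\<psi>)
      fix x assume "\<psi> x = y" thus "x = \<psi> y" using \<psi>\<psi>[of x] by simp
    qed
  qed
  moreover have "piA \<sigma> \<alpha> A = \<psi> \<circ> \<sigma>" unfolding piA_def \<psi>_def by auto
  ultimately show ?thesis using permutes_compose[OF sperm] by metis
qed

lemma pi_delete:
  assumes "closedA A" "e \<in> A"
  shows "piA \<sigma> \<alpha> (A - {e, \<alpha> e}) = transpose e (\<alpha> e) \<circ> piA \<sigma> \<alpha> A"
proof
  fix d
  have eD: "e \<in> D" using assms closedA_def by auto
  have ne: "\<alpha> e \<noteq> e" using aneq[OF eD] .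
  have aeA: "\<alpha> e \<in> A" using assms closedA_def by auto
  show "piA \<sigma> \<alpha> (A - {e, \<alpha> e}) d = (transpose e (\<alpha> e) \<circ> piA \<sigma> \<alpha> A) d"
  proof (cases "\<sigma> d = e")
    case True
    hence "piA \<sigma> \<alpha> (A - {e, \<alpha> e}) d = e" unfolding piA_def by simp
    moreover have "piA \<sigma> \<alpha> A d = \<alpha> e" unfolding piA_def using True assms(2) by simp
    ultimately show ?thesis by (simp add: transpose_def)
  next
    case False
    show ?thesis
    proof (cases "\<sigma> d = \<alpha> e")
      case True
      hence "piA \<sigma> \<alpha> (A - {e, \<alpha> e}) d = \<alpha> e" unfolding piA_def by simp
      moreover have "piA \<sigma> \<alpha> A d = e" unfolding piA_def using True aeA by simp
      ultimately show ?thesis using ne by (simp add: transpose_def)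
    next
      case F2: False
      have "\<alpha> (\<sigma> d) \<noteq> e" using F2 by (metis aa)
      moreover have "\<alpha> (\<sigma> d) \<noteq> \<alpha> e" using False by (metis aa)
      ultimately show ?thesis using False F2 unfolding piA_def by (simp add: transpose_def)
    qed
  qed
qed

abbreviation R where "R A \<equiv> relA vert \<alpha> A"

lemma relA_sym: assumes "closedA A" "(x, y) \<in> R A" shows "(y, x) \<in> R A"
proof -
  obtain d where d: "d \<in> A" "x = vert d" "y = vert (\<alpha> d)" using assms(2) unfolding relA_def by auto
  have "\<alpha> d \<in> A" using d(1) assms(1) closedA_def by auto
  thus ?thesis unfolding relA_def using d by (auto intro!: exI[of _ "\<alpha> d"])
qed

lemma rtr_sym:
  assumes "closedA A" "(x, y) \<in> (R A)\<^sup>*" shows "(y, x) \<in> (R A)\<^sup>*"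
proof -
  have "sym (R A)" unfolding sym_def using relA_sym[OF assms(1)] by blast
  hence "sym ((R A)\<^sup>*)" by (rule sym_rtrancl)
  thus ?thesis using assms(2) unfolding sym_def by blast
qed

lemma relA_V: "closedA A \<Longrightarrow> R A \<subseteq> V \<times> V"
  unfolding relA_def closedA_def using vertD by auto

lemma img_V: "closedA A \<Longrightarrow> x \<in> V \<Longrightarrow> (R A)\<^sup>* `` {x} \<subseteq> V"
proof
  fix y assume A: "closedA A" "x \<in> V" "y \<in> (R A)\<^sup>* `` {x}"
  hence "(x, y) \<in> (R A)\<^sup>*" by auto
  thus "y \<in> V" using A(2) relA_V[OF A(1)] by (induction rule: rtrancl_induct) auto
qed

lemma fin_comps: "finite (comps V vert \<alpha> A)"
  unfolding comps_def using finV by simp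

abbreviation F where "F A \<equiv> ncyc (piA \<sigma> \<alpha> A) D"
abbreviation kk where "kk A \<equiv> card (comps V vert \<alpha> A)"

definition delta :: "'d set \<Rightarrow> int" where
  "delta A = 4 * int (kk A) - 2 * int (card V) + int (card A) - 2 * int (F A)"

lemma K2:
  assumes "closedA A" "e \<in> A" "(vert e, vert (\<alpha> e)) \<in> (R (A - {e, \<alpha> e}))\<^sup>*"
  shows "comps V vert \<alpha> (A - {e, \<alpha> e}) = comps V vert \<alpha> A"
proof -
  let ?A' = "A - {e, \<alpha> e}"
  have c': "closedA ?A'" using assms(1) unfolding closedA_def by (auto dest: arg_cong[where f=\<alpha>])
  have sub: "R ?A' \<subseteq> R A" unfolding relA_def by auto
  have "R A \<subseteq> (R ?A')\<^sup>*"
  proof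
    fix p assume "p \<in> R A"
    then obtain d where d: "d \<in> A" "p = (vert d, vert (\<alpha> d))" unfolding relA_def by auto
    show "p \<in> (R ?A')\<^sup>*"
    proof (cases "d \<in> {e, \<alpha> e}")
      case True
      thus ?thesis using d assms(3) rtr_sym[OF c' assms(3)] by auto
    next
      case False
      hence "p \<in> R ?A'" using d unfolding relA_def by auto
      thus ?thesis by auto
    qed
  qed
  hence "(R A)\<^sup>* = (R ?A')\<^sup>*" using rtrancl_subset[OF sub] by blast
  thus ?thesis unfolding comps_def by simp
qed

lemma K1:
  assumes "closedA A" "e \<in> A"
  shows "kk (A - {e, \<alpha> e}) \<le> kk A + 1"
proof -
  let ?A' = "A - {e, \<alpha> e}"
  define u where "u = vert e"
  define w where "w = vert (\<alpha> e)"
  have c': "closedA ?A'" using assms(1) unfolding closedA_def by (auto dest: arg_cong[where f=\<alpha>])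
  have eD: "e \<in> D" using assms closedA_def by auto
  have uV: "u \<in> V" unfolding u_def using vertD[OF eD] .
  let ?S = "(R ?A')\<^sup>*" and ?T = "(R A)\<^sup>*"
  have sub: "R ?A' \<subseteq> R A" unfolding relA_def by auto
  have C: "(x, y) \<in> ?T \<Longrightarrow> (x, y) \<in> ?S \<or> (x, u) \<in> ?S \<or> (x, w) \<in> ?S" for x y
  proof (induction rule: rtrancl_induct)
    case (step y z)
    show ?case
    proof (cases "(y, z) \<in> R ?A'")
      case True thus ?thesis using step by (meson rtrancl.rtrancl_into_rtrancl)
    next
      case False
      from step(2) obtain d where d: "d \<in> A" "y = vert d" "z = vert (\<alpha> d)" unfolding relA_def by auto
      with False have "d \<in> {e, \<alpha> e}" unfolding relA_def by auto
      hence "y = u \<or> y = w" using d unfolding u_def w_def by auto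
      thus ?thesis using step(3) by auto
    qed
  qed simp
  have eqimg: "?S `` {x} = ?S `` {y}" if "(x, y) \<in> ?S" for x y
    using that rtr_sym[OF c' that] by (auto intro: rtrancl_trans)
  have "comps V vert \<alpha> ?A' \<subseteq> {?S `` {u}, ?S `` {w}} \<union> {Cc \<in> comps V vert \<alpha> A. u \<notin> Cc}"
  proof
    fix Cc assume "Cc \<in> comps V vert \<alpha> ?A'"
    then obtain x where x: "x \<in> V" "Cc = ?S `` {x}" unfolding comps_def by auto
    show "Cc \<in> {?S `` {u}, ?S `` {w}} \<union> {Cc \<in> comps V vert \<alpha> A. u \<notin> Cc}"
    proof (cases "(x, u) \<in> ?S \<or> (x, w) \<in> ?S")
      case True thus ?thesis using eqimg x by auto
    next
      case False
      have "?S `` {x} = ?T `` {x}"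
      proof
        show "?S `` {x} \<subseteq> ?T `` {x}" using rtrancl_mono[OF sub] by auto
        show "?T `` {x} \<subseteq> ?S `` {x}" using C False by auto
      qed
      moreover have "u \<notin> ?T `` {x}" using C[of x u] False by auto
      ultimately show ?thesis using x unfolding comps_def by auto
    qed
  qed
  hence c1: "kk ?A' \<le> card ({?S `` {u}, ?S `` {w}} \<union> {Cc \<in> comps V vert \<alpha> A. u \<notin> Cc})"
    by (rule card_mono[rotated]) (use fin_comps in auto)
  have c2: "card ({?S `` {u}, ?S `` {w}} \<union> {Cc \<in> comps V vert \<alpha> A. u \<notin> Cc}) \<le>
     card {?S `` {u}, ?S `` {w}} + card {Cc \<in> comps V vert \<alpha> A. u \<notin> Cc}"
    by (rule card_Un_le)
  have c3: "card {?S `` {u}, ?S `` {w}} \<le> 2" by (rule card_insert_le_m1) auto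
  have Tu: "?T `` {u} \<in> comps V vert \<alpha> A" using uV unfolding comps_def by auto
  have c4: "card {Cc \<in> comps V vert \<alpha> A. u \<notin> Cc} \<le> kk A - 1"
  proof -
    have "u \<in> ?T `` {u}" by auto
    hence "{Cc \<in> comps V vert \<alpha> A. u \<notin> Cc} \<subseteq> comps V vert \<alpha> A - {?T `` {u}}" by auto
    hence "card {Cc \<in> comps V vert \<alpha> A. u \<notin> Cc} \<le> card (comps V vert \<alpha> A - {?T `` {u}})"
      by (rule card_mono[rotated]) (use fin_comps in auto)
    also have "\<dots> = kk A - 1" using Tu fin_comps by (simp add: card_Diff_singleton)
    finally show ?thesis .
  qed
  have "kk A \<ge> 1" using Tu fin_comps by (metis One_nat_def Suc_leI card_gt_0_iff empty_iff)
  thus ?thesis using c1 c2 c3 c4 by linarith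
qed

lemma walk:
  assumes "closedA A" "e \<in> A" "\<alpha> e \<notin> orbit_of (piA \<sigma> \<alpha> A) e"
  shows "(vert e, vert (\<alpha> e)) \<in> (R (A - {e, \<alpha> e}))\<^sup>*"
proof -
  let ?f = "piA \<sigma> \<alpha> A" and ?A' = "A - {e, \<alpha> e}"
  have c': "closedA ?A'" using assms(1) unfolding closedA_def by (auto dest: arg_cong[where f=\<alpha>])
  have fp: "?f permutes D" using pi_permutes[OF assms(1)] .
  have eD: "e \<in> D" using assms closedA_def by auto
  define d1 where "d1 = inv \<sigma> e"
  define d2 where "d2 = inv \<sigma> (\<alpha> e)"
  have sd: "\<sigma> d1 = e" "\<sigma> d2 = \<alpha> e" unfolding d1_def d2_def using permutes_inverses(1)[OF sperm] by auto
  have fd: "?f d1 = \<alpha> e" "?f d2 = e" using sd assms(2) closedA_iff[OF assms(1)] unfolding piA_def by auto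
  have "\<alpha> e \<in> orbit_of ?f d1" using fd f_in_orbit_of by metis
  hence "d1 \<in> orbit_of ?f (\<alpha> e)" using orbit_of_sym[OF fp finD] by blast
  then obtain n where n: "(?f ^^ n) (\<alpha> e) = d1" unfolding orbit_of_def by auto
  define j where "j = (LEAST j. (?f ^^ j) (\<alpha> e) = d1)"
  have jP: "(?f ^^ j) (\<alpha> e) = d1" unfolding j_def by (rule LeastI[of _ n]) (rule n)
  have jmin: "i < j \<Longrightarrow> (?f ^^ i) (\<alpha> e) \<noteq> d1" for i using not_less_Least unfolding j_def by blast
  have nd2: "(?f ^^ i) (\<alpha> e) \<noteq> d2" for i
  proof
    assume "(?f ^^ i) (\<alpha> e) = d2"
    hence "(?f ^^ Suc i) (\<alpha> e) = e" using fd by simp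
    hence "e \<in> orbit_of ?f (\<alpha> e)" using funpow_in_orbit_of by metis
    hence "\<alpha> e \<in> orbit_of ?f e" using orbit_of_sym[OF fp finD] by blast
    thus False using assms(3) by blast
  qed
  have step: "(vert x, vert (?f x)) \<in> (R ?A')\<^sup>*" if "x \<noteq> d1" "x \<noteq> d2" "x \<in> D" for x
  proof (cases "\<sigma> x \<in> A")
    case True
    have "\<sigma> x \<noteq> e" "\<sigma> x \<noteq> \<alpha> e" using that sd permutes_inj[OF sperm] by (metis injD)+
    hence "\<sigma> x \<in> ?A'" using True by auto
    hence "(vert (\<sigma> x), vert (\<alpha> (\<sigma> x))) \<in> R ?A'" unfolding relA_def by auto
    thus ?thesis using True vs[OF that(3)] unfolding piA_def by auto
  next
    case False thus ?thesis using vs[OF that(3)] unfolding piA_def by auto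
  qed
  have aeD: "\<alpha> e \<in> D" using eD by simp
  have "i \<le> j \<Longrightarrow> (vert (\<alpha> e), vert ((?f ^^ i) (\<alpha> e))) \<in> (R ?A')\<^sup>*" for i
  proof (induction i)
    case (Suc i)
    have xD: "(?f ^^ i) (\<alpha> e) \<in> D" using subsetD[OF orbit_of_subset[OF fp aeD] funpow_in_orbit_of] .
    have "(vert ((?f ^^ i) (\<alpha> e)), vert (?f ((?f ^^ i) (\<alpha> e)))) \<in> (R ?A')\<^sup>*"
      using step[OF jmin nd2 xD] Suc by auto
    thus ?case using Suc by (auto intro: rtrancl_trans)
  qed simp
  from this[of j] have "(vert (\<alpha> e), vert d1) \<in> (R ?A')\<^sup>*" using jP by simp
  moreover have "vert d1 = vert e"
  proof -
    have "d1 \<in> D" unfolding d1_def using eD permutes_in_image[OF permutes_inv[OF sperm]] by blast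
    thus ?thesis using vs sd by metis
  qed
  ultimately show ?thesis using rtr_sym[OF c'] by metis
qed

lemma delta_step:
  assumes "closedA A" "e \<in> A"
  shows "delta (A - {e, \<alpha> e}) \<le> delta A"
proof -
  let ?A' = "A - {e, \<alpha> e}" and ?f = "piA \<sigma> \<alpha> A"
  have eD: "e \<in> D" using assms closedA_def by auto
  have ne: "e \<noteq> \<alpha> e" using aneq[OF eD] by auto
  have g: "piA \<sigma> \<alpha> ?A' = transpose e (\<alpha> e) \<circ> ?f" by (rule pi_delete[OF assms])
  have fp: "?f permutes D" using pi_permutes[OF assms(1)] .
  have cardA: "card ?A' + 2 = card A"
  proof -
    have "{e, \<alpha> e} \<subseteq> A" using assms closedA_iff by auto
    moreover have "finite A" using assms(1) finD closedA_def finite_subset by metis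
    moreover have "card {e, \<alpha> e} \<le> card A" using calculation by (intro card_mono) auto
    ultimately show ?thesis using ne by (simp add: card_Diff_subset)
  qed
  show ?thesis
  proof (cases "\<alpha> e \<in> orbit_of ?f e")
    case True
    have "F ?A' = F A + 1" unfolding g using ncyc_transpose(1)[OF fp finD ne eD _ True] eD by simp
    moreover have "kk ?A' \<le> kk A + 1" using K1[OF assms] .
    ultimately show ?thesis unfolding delta_def using cardA by linarith
  next
    case False
    have "F ?A' + 1 = F A" unfolding g using ncyc_transpose(2)[OF fp finD ne eD _ False] eD by simp
    moreover have "kk ?A' = kk A" using K2[OF assms walk[OF assms False]] by simp
    ultimately show ?thesis unfolding delta_def using cardA by linarith
  qed
qed

lemma finite_closed: "closedA A \<Longrightarrow> finite A"
  using finD closedA_def finite_subset by metis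

lemma delta_lower: "closedA A \<Longrightarrow> delta {} \<le> delta A"
proof (induction "card A" arbitrary: A rule: less_induct)
  case less
  show ?case
  proof (cases "A = {}")
    case False
    then obtain e where e: "e \<in> A" by auto
    let ?A' = "A - {e, \<alpha> e}"
    have c': "closedA ?A'" using less(2) unfolding closedA_def by (auto dest: arg_cong[where f=\<alpha>])
    have "card ?A' < card A" by (rule psubset_card_mono) (use e finite_closed[OF less(2)] in auto)
    hence "delta {} \<le> delta ?A'" using less(1) c' by blast
    thus ?thesis using delta_step[OF less(2) e] by linarith
  qed simp
qed

lemma delta_upper: "closedA A \<Longrightarrow> delta A \<le> delta D"
proof (induction "card (D - A)" arbitrary: A rule: less_induct)
  case less
  show ?case
  proof (cases "A = D")
    case False
    then obtain e where e: "e \<in> D" "e \<notin> A" using less(2) closedA_def by auto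
    let ?B = "A \<union> {e, \<alpha> e}"
    have cB: "closedA ?B" using less(2) e unfolding closedA_def by auto
    have ae: "\<alpha> e \<notin> A" using e closedA_iff[OF less(2)] by blast
    have eq: "?B - {e, \<alpha> e} = A" using e ae by auto
    have "card (D - ?B) < card (D - A)" by (rule psubset_card_mono) (use e finD in auto)
    hence "delta ?B \<le> delta D" using less(1) cB by blast
    moreover have "delta A \<le> delta ?B" using delta_step[OF cB, of e] eq by simp
    ultimately show ?thesis by linarith
  qed simp
qed

end

lemma conj_ncyc:
  assumes "\<And>x. g (h x) = h (f x)" "inj h" "h ` D = D"
  shows "ncyc g D = ncyc f D"
proof -
  have it: "(g ^^ k) (h x) = h ((f ^^ k) x)" for k x by (induction k) (auto simp: assms(1))
  have orb: "orbit_of g (h x) = h ` orbit_of f x" for x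
    unfolding orbit_of_def using it by auto
  have "{orbit_of g d | d. d \<in> D} = {orbit_of g (h x) | x. x \<in> D}"
  proof (intro set_eqI iffI)
    fix S assume "S \<in> {orbit_of g d | d. d \<in> D}"
    then obtain d where d: "d \<in> D" "S = orbit_of g d" by blast
    then obtain x where "x \<in> D" "d = h x" using assms(3) by blast
    thus "S \<in> {orbit_of g (h x) | x. x \<in> D}" using d by blast
  next
    fix S assume "S \<in> {orbit_of g (h x) | x. x \<in> D}"
    then obtain x where x: "x \<in> D" "S = orbit_of g (h x)" by blast
    hence "h x \<in> D" using assms(3) by blast
    thus "S \<in> {orbit_of g d | d. d \<in> D}" using x by blast
  qed
  also have "\<dots> = (\<lambda>S. h ` S) ` {orbit_of f x | x. x \<in> D}" using orb by auto
  finally have eq: "{orbit_of g d | d. d \<in> D} = (\<lambda>S. h ` S) ` {orbit_of f x | x. x \<in> D}" .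
  have "inj_on (\<lambda>S. h ` S) X" for X using assms(2) by (simp add: inj_image_eq_iff inj_on_def)
  thus ?thesis unfolding ncyc_def eq by (simp add: card_image)
qed

lemma orbit_of_step_subset: "orbit_of h (h y) \<subseteq> orbit_of h y"
proof
  fix x assume "x \<in> orbit_of h (h y)"
  then obtain k where "x = (h ^^ k) (h y)" unfolding orbit_of_def by auto
  hence "x = (h ^^ Suc k) y" by (simp add: funpow_swap1)
  thus "x \<in> orbit_of h y" unfolding orbit_of_def by blast
qed

locale fr =
  fixes D :: "'d set" and \<rho> \<alpha> :: "'d \<Rightarrow> 'd" and U :: "'d set" and B :: "'d set set"
  assumes fin: "finite D" and rp: "\<rho> permutes D" and ap: "\<alpha> permutes D" and aa: "\<And>x. \<alpha> (\<alpha> x) = x"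
    and UD: "U \<subseteq> D" and Ua: "\<And>d. d \<in> U \<Longrightarrow> \<alpha> d \<in> U" and BU: "\<Union>B = U"
begin

abbreviation f where "f \<equiv> piA \<rho> \<alpha> U"
abbreviation h where "h \<equiv> sub_rotation \<rho> B \<circ> \<alpha>"
definition T where "T = {x \<in> D. \<rho> x \<in> U}"

lemma fp: "f permutes D"
proof -
  define \<psi> where "\<psi> x = (if x \<in> U then \<alpha> x else x)" for x
  have \<psi>\<psi>: "\<psi> (\<psi> x) = x" for x unfolding \<psi>_def using Ua aa by (metis)
  have "\<psi> permutes D" unfolding permutes_def
  proof (intro conjI allI impI)
    fix x assume "x \<notin> D" thus "\<psi> x = x" unfolding \<psi>_def using UD by auto
  next
    fix y show "\<exists>!x. \<psi> x = y"
    proof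
      show "\<psi> (\<psi> y) = y" by (rule \<psi>\<psi>)
      fix x assume "\<psi> x = y" thus "x = \<psi> y" using \<psi>\<psi>[of x] by simp
    qed
  qed
  moreover have "f = \<psi> \<circ> \<rho>" unfolding piA_def \<psi>_def by auto
  ultimately show ?thesis using permutes_compose[OF rp] by metis
qed

lemma rD[simp]: "\<rho> x \<in> D \<longleftrightarrow> x \<in> D" using permutes_in_image[OF rp] by blast
lemma aD[simp]: "\<alpha> x \<in> D \<longleftrightarrow> x \<in> D" using permutes_in_image[OF ap] by blast

lemma f_notT: "x \<notin> T \<Longrightarrow> f x = \<rho> x"
proof -
  assume "x \<notin> T"
  show "f x = \<rho> x"
  proof (cases "x \<in> D")
    case True thus ?thesis using \<open>x \<notin> T\<close> unfolding T_def piA_def by auto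
  next
    case False
    hence "\<rho> x = x" using rp unfolding permutes_def by auto
    thus ?thesis using False UD unfolding piA_def by auto
  qed
qed

lemma fD: "x \<in> D \<Longrightarrow> (f ^^ n) x \<in> D"
  using subsetD[OF orbit_of_subset[OF fp] funpow_in_orbit_of] .

lemma KC:
  assumes z: "z \<in> T" and k: "k = (LEAST k. 0 < k \<and> (f ^^ k) z \<in> T)"
  shows "0 < k" "(f ^^ k) z \<in> T" "\<rho> ((f ^^ k) z) = h (\<rho> z)"
proof -
  have zD: "z \<in> D" using z T_def by auto
  obtain p where p: "p > 0" "(f ^^ p) z = z" using orbit_of_period[OF fp fin] by blast
  have kP: "0 < k \<and> (f ^^ k) z \<in> T" unfolding k by (rule LeastI[of _ p]) (use p z in auto)
  thus "0 < k" "(f ^^ k) z \<in> T" by auto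
  have kmin: "0 < i \<Longrightarrow> i < k \<Longrightarrow> (f ^^ i) z \<notin> T" for i using not_less_Least unfolding k by blast
  let ?y = "\<rho> z"
  have yU: "?y \<in> U" using z T_def by auto
  have fz: "f z = \<alpha> ?y" using yU unfolding piA_def by simp
  have it: "1 \<le> i \<Longrightarrow> i \<le> k \<Longrightarrow> (f ^^ i) z = (\<rho> ^^ (i - 1)) (\<alpha> ?y)" for i
  proof (induction i)
    case (Suc i)
    show ?case
    proof (cases "i = 0")
      case True thus ?thesis using fz by simp
    next
      case False
      have "(f ^^ i) z \<notin> T" using kmin[of i] False Suc by auto
      hence "(f ^^ Suc i) z = \<rho> ((f ^^ i) z)" using f_notT by simp
      also have "\<dots> = \<rho> ((\<rho> ^^ (i - 1)) (\<alpha> ?y))" using Suc False by simp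
      also have "\<dots> = (\<rho> ^^ (Suc i - 1)) (\<alpha> ?y)" using False
        by (metis Suc_diff_1 diff_Suc_1 funpow.simps(2) neq0_conv o_apply)
      finally show ?thesis .
    qed
  qed simp
  have rr: "(\<rho> ^^ j) (\<alpha> ?y) = \<rho> ((f ^^ j) z)" if "1 \<le> j" "j \<le> k" for j
  proof -
    have "(\<rho> ^^ j) (\<alpha> ?y) = \<rho> ((\<rho> ^^ (j - 1)) (\<alpha> ?y))"
      using that by (cases j) auto
    thus ?thesis using it[OF that] by simp
  qed
  have L: "(LEAST j. 0 < j \<and> (\<rho> ^^ j) (\<alpha> ?y) \<in> \<Union>B) = k"
  proof (rule Least_equality)
    show "0 < k \<and> (\<rho> ^^ k) (\<alpha> ?y) \<in> \<Union>B" using kP rr[of k] BU T_def by auto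
  next
    fix j assume j: "0 < j \<and> (\<rho> ^^ j) (\<alpha> ?y) \<in> \<Union>B"
    show "k \<le> j"
    proof (rule ccontr)
      assume "\<not> k \<le> j"
      hence "(f ^^ j) z \<notin> T" using kmin j by auto
      moreover have "(f ^^ j) z \<in> D" using fD zD by blast
      ultimately have "\<rho> ((f ^^ j) z) \<notin> U" using T_def by auto
      thus False using rr[of j] j \<open>\<not> k \<le> j\<close> BU by auto
    qed
  qed
  show "\<rho> ((f ^^ k) z) = h (\<rho> z)"
    unfolding o_apply sub_rotation_def L using rr[of k] kP by simp
qed

lemma h_step:
  assumes "z \<in> T"
  shows "\<exists>z'. z' \<in> orbit_of f z \<and> z' \<in> T \<and> \<rho> z' = h (\<rho> z)"
proof -
  define k where "k = (LEAST k. 0 < k \<and> (f ^^ k) z \<in> T)"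
  have "(f ^^ k) z \<in> orbit_of f z" by (rule funpow_in_orbit_of)
  moreover have "(f ^^ k) z \<in> T" "\<rho> ((f ^^ k) z) = h (\<rho> z)" using KC[OF assms k_def] by auto
  ultimately show ?thesis by (intro exI[of _ "(f ^^ k) z"]) simp
qed

lemma orbit_h:
  assumes "z \<in> T"
  shows "orbit_of h (\<rho> z) = \<rho> ` (orbit_of f z \<inter> T)"
proof
  show "orbit_of h (\<rho> z) \<subseteq> \<rho> ` (orbit_of f z \<inter> T)"
  proof (rule orbit_of_closed)
    show "\<forall>y\<in>\<rho> ` (orbit_of f z \<inter> T). h y \<in> \<rho> ` (orbit_of f z \<inter> T)"
    proof
      fix y assume "y \<in> \<rho> ` (orbit_of f z \<inter> T)"
      then obtain z1 where z1: "z1 \<in> orbit_of f z" "z1 \<in> T" "y = \<rho> z1" by auto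
      obtain z' where z': "z' \<in> orbit_of f z1" "z' \<in> T" "\<rho> z' = h y" using h_step[OF z1(2)] z1 by blast
      have "orbit_of f z1 = orbit_of f z" using orbit_of_eq[OF fp fin z1(1)] .
      thus "h y \<in> \<rho> ` (orbit_of f z \<inter> T)" using z' by (metis IntI image_eqI)
    qed
    have "z \<in> orbit_of f z \<inter> T" using assms self_in_orbit_of[of z f] by simp
    thus "\<rho> z \<in> \<rho> ` (orbit_of f z \<inter> T)" by (rule imageI)
  qed
next
  have main: "\<forall>z\<in>T. (f ^^ n) z \<in> T \<longrightarrow> \<rho> ((f ^^ n) z) \<in> orbit_of h (\<rho> z)" for n
  proof (induction n rule: less_induct)
    case (less n)
    show ?case
    proof (intro ballI impI)
      fix z assume z: "z \<in> T" "(f ^^ n) z \<in> T"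
      show "\<rho> ((f ^^ n) z) \<in> orbit_of h (\<rho> z)"
      proof (cases "n = 0")
        case True thus ?thesis using self_in_orbit_of by simp
      next
        case False
        define k where "k = (LEAST k. 0 < k \<and> (f ^^ k) z \<in> T)"
        note K = KC[OF z(1) k_def]
        have "k \<le> n" unfolding k_def by (rule Least_le) (use False z in auto)
        show ?thesis
        proof (cases "k = n")
          case True thus ?thesis using K f_in_orbit_of by metis
        next
          case False
          hence lt: "n - k < n" using K(1) \<open>k \<le> n\<close> by auto
          have eq: "(f ^^ n) z = (f ^^ (n - k)) ((f ^^ k) z)"
            using \<open>k \<le> n\<close> by (metis funpow_add le_add_diff_inverse2 o_apply)
          have "\<rho> ((f ^^ n) z) \<in> orbit_of h (\<rho> ((f ^^ k) z))"
            using less(1)[OF lt] K(2) z(2) eq by metis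
          also have "\<dots> = orbit_of h (h (\<rho> z))" using K(3) by simp
          also have "\<dots> \<subseteq> orbit_of h (\<rho> z)" by (rule orbit_of_step_subset)
          finally show ?thesis .
        qed
      qed
    qed
  qed
  show "\<rho> ` (orbit_of f z \<inter> T) \<subseteq> orbit_of h (\<rho> z)"
  proof
    fix y assume "y \<in> \<rho> ` (orbit_of f z \<inter> T)"
    then obtain x where x: "x \<in> orbit_of f z" "x \<in> T" "y = \<rho> x" by auto
    then obtain n where "x = (f ^^ n) z" unfolding orbit_of_def by auto
    thus "y \<in> orbit_of h (\<rho> z)" using main assms x by blast
  qed
qed

lemma count:
  "ncyc f D = card {orbit_of h d | d. d \<in> U} + card {Ob \<in> {orbit_of \<rho> d | d. d \<in> D}. Ob \<inter> U = {}}"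
proof -
  let ?O = "{orbit_of f d | d. d \<in> D}"
  let ?M = "{Ob \<in> ?O. Ob \<inter> T \<noteq> {}}" and ?N = "{Ob \<in> ?O. Ob \<inter> T = {}}"
  have finO: "finite ?O" using fin by simp
  have c1: "ncyc f D = card ?M + card ?N"
    unfolding ncyc_def by (subst card_Un_disjoint[symmetric]) (use finO in \<open>auto intro: arg_cong[where f=card]\<close>)
  have M: "card ?M = card {orbit_of h d | d. d \<in> U}"
  proof -
    have inj: "inj_on (\<lambda>Ob. \<rho> ` (Ob \<inter> T)) ?M"
    proof (rule inj_onI)
      fix O1 O2 assume O1: "O1 \<in> ?M" and O2: "O2 \<in> ?M" and eq: "\<rho> ` (O1 \<inter> T) = \<rho> ` (O2 \<inter> T)"
      have "O1 \<inter> T = O2 \<inter> T" using eq permutes_inj[OF rp] by (simp add: inj_image_eq_iff)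
      then obtain x where x: "x \<in> O1" "x \<in> O2" using O1 by auto
      obtain d1 where "O1 = orbit_of f d1" using O1 by auto
      moreover obtain d2 where "O2 = orbit_of f d2" using O2 by auto
      ultimately show "O1 = O2" using orbit_of_disjoint[OF fp fin] x by blast
    qed
    have img: "(\<lambda>Ob. \<rho> ` (Ob \<inter> T)) ` ?M = {orbit_of h d | d. d \<in> U}"
    proof (intro set_eqI iffI)
      fix S assume "S \<in> (\<lambda>Ob. \<rho> ` (Ob \<inter> T)) ` ?M"
      then obtain Ob where Ob: "Ob \<in> ?M" "S = \<rho> ` (Ob \<inter> T)" by blast
      then obtain d z where dz: "Ob = orbit_of f d" "z \<in> Ob" "z \<in> T" by blast
      have "Ob = orbit_of f z" using orbit_of_eq[OF fp fin] dz by metis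
      hence "S = orbit_of h (\<rho> z)" using Ob orbit_h[OF dz(3)] by simp
      moreover have "\<rho> z \<in> U" using dz T_def by auto
      ultimately show "S \<in> {orbit_of h d | d. d \<in> U}" by blast
    next
      fix S assume "S \<in> {orbit_of h d | d. d \<in> U}"
      then obtain y where y: "y \<in> U" "S = orbit_of h y" by blast
      define z where "z = inv \<rho> y"
      have rz: "\<rho> z = y" unfolding z_def using permutes_inverses(1)[OF rp] by simp
      have zD: "z \<in> D" using rz y UD rD by blast
      have zT: "z \<in> T" using zD rz y T_def by auto
      have "S = \<rho> ` (orbit_of f z \<inter> T)" using orbit_h[OF zT] y rz by simp
      moreover have "orbit_of f z \<in> ?M"
      proof -
        have "z \<in> orbit_of f z \<inter> T" using zT self_in_orbit_of[of z f] by simp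
        hence "orbit_of f z \<inter> T \<noteq> {}" by blast
        thus ?thesis using zD by blast
      qed
      ultimately show "S \<in> (\<lambda>Ob. \<rho> ` (Ob \<inter> T)) ` ?M" by blast
    qed
    show ?thesis using card_image[OF inj] img by simp
  qed
  have N: "?N = {Ob \<in> {orbit_of \<rho> d | d. d \<in> D}. Ob \<inter> U = {}}"
  proof -
    have agree: "\<forall>y. y \<notin> T \<longrightarrow> f y = \<rho> y" using f_notT by blast
    have agree': "\<forall>y. y \<notin> T \<longrightarrow> \<rho> y = f y" using f_notT by metis
    have pre: "\<exists>v\<in>orbit_of \<rho> d. \<rho> v = u" if "u \<in> orbit_of \<rho> d" for u d
    proof -
      obtain p where p: "p > 0" "(\<rho> ^^ p) u = u" using orbit_of_period[OF rp fin] by blast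
      then obtain q where q: "p = Suc q" by (cases p) auto
      have "(\<rho> ^^ q) u \<in> orbit_of \<rho> u" by (rule funpow_in_orbit_of)
      moreover have "orbit_of \<rho> u = orbit_of \<rho> d" using orbit_of_eq[OF rp fin that] .
      moreover have "\<rho> ((\<rho> ^^ q) u) = u" using p q by simp
      ultimately show ?thesis by metis
    qed
    show ?thesis
    proof (intro set_eqI iffI)
      fix Ob assume "Ob \<in> ?N"
      then obtain d where d: "d \<in> D" "Ob = orbit_of f d" "orbit_of f d \<inter> T = {}" by blast
      have eq: "orbit_of \<rho> d = orbit_of f d" using orbit_of_agree[OF d(3) agree] .
      have "orbit_of \<rho> d \<inter> U = {}"
      proof (rule ccontr)
        assume "orbit_of \<rho> d \<inter> U \<noteq> {}"
        then obtain u where u: "u \<in> orbit_of \<rho> d" "u \<in> U" by blast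
        then obtain v where v: "v \<in> orbit_of \<rho> d" "\<rho> v = u" using pre by blast
        have "v \<in> D" using v orbit_of_subset[OF rp d(1)] by blast
        hence "v \<in> T" using v u T_def by auto
        thus False using v eq d(3) by blast
      qed
      thus "Ob \<in> {Ob \<in> {orbit_of \<rho> d | d. d \<in> D}. Ob \<inter> U = {}}" using d eq by blast
    next
      fix Ob assume "Ob \<in> {Ob \<in> {orbit_of \<rho> d | d. d \<in> D}. Ob \<inter> U = {}}"
      then obtain d where d: "d \<in> D" "Ob = orbit_of \<rho> d" "orbit_of \<rho> d \<inter> U = {}" by blast
      have "orbit_of \<rho> d \<inter> T = {}"
      proof (rule ccontr)
        assume "orbit_of \<rho> d \<inter> T \<noteq> {}"
        then obtain x where "x \<in> orbit_of \<rho> d" "x \<in> T" by blast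
        hence "\<rho> x \<in> orbit_of \<rho> d" "\<rho> x \<in> U" using T_def orbit_of_eq[OF rp fin] f_in_orbit_of by (metis, auto)
        thus False using d(3) by blast
      qed
      moreover have "orbit_of f d = orbit_of \<rho> d" using orbit_of_agree[OF calculation agree'] .
      ultimately show "Ob \<in> ?N" using d by auto
    qed
  qed
  show ?thesis using c1 M N by simp
qed

end

context rg begin

abbreviation E where "E \<equiv> graph_edges D \<alpha>"

lemma E_img: "E = (\<lambda>d. {d, \<alpha> d}) ` D" unfolding graph_edges_def by auto
lemma finE: "finite E" unfolding E_img using finD by simp

lemma E_sub: "e \<in> E \<Longrightarrow> e \<subseteq> D" unfolding E_img by auto

lemma UE: "\<Union>E = D" unfolding E_img by auto

lemma edge_of: "x \<in> e \<Longrightarrow> e \<in> E \<Longrightarrow> e = {x, \<alpha> x}"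
  unfolding E_img by auto

lemma E_closed: assumes "S \<subseteq> E" shows "closedA (\<Union>S)"
proof -
  have "\<Union>S \<subseteq> D" using assms E_sub by blast
  moreover have "\<forall>d\<in>\<Union>S. \<alpha> d \<in> \<Union>S"
  proof
    fix d assume "d \<in> \<Union>S"
    then obtain e where e: "e \<in> S" "d \<in> e" by blast
    hence "e = {d, \<alpha> d}" using edge_of assms by blast
    thus "\<alpha> d \<in> \<Union>S" using e(1) by blast
  qed
  ultimately show ?thesis by (simp add: closedA_def)
qed

lemma E_disj: "e1 \<in> E \<Longrightarrow> e2 \<in> E \<Longrightarrow> x \<in> e1 \<Longrightarrow> x \<in> e2 \<Longrightarrow> e1 = e2"
  using edge_of by metis

lemma card_edge: assumes "e \<in> E" shows "card e = 2"
proof -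
  obtain d where d: "d \<in> D" "e = {d, \<alpha> d}" using assms unfolding E_img by blast
  have "d \<noteq> \<alpha> d" using aneq[OF d(1)] by simp
  thus ?thesis using d(2) by simp
qed

lemma card_US: assumes "S \<subseteq> E" shows "card (\<Union>S) = 2 * card S"
proof -
  have "disjoint S" unfolding disjoint_def using E_disj assms by blast
  moreover have "\<And>A. A \<in> S \<Longrightarrow> finite A" using assms E_sub finD finite_subset by blast
  ultimately have "card (\<Union>S) = sum card S" by (rule card_Union_disjoint)
  also have "\<dots> = sum (\<lambda>_. 2) S" using assms card_edge by (intro sum.cong) auto
  finally show ?thesis by simp
qed

lemma cardD: "card D = 2 * card E" using card_US[of E] UE by simp

lemma compl: assumes "S \<subseteq> E" shows "D - \<Union>(E - S) = \<Union>S"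
proof (intro set_eqI iffI)
  fix x assume x: "x \<in> D - \<Union>(E - S)"
  have "{x, \<alpha> x} \<in> E" unfolding E_img using x by auto
  show "x \<in> \<Union>S"
  proof (rule ccontr)
    assume "x \<notin> \<Union>S"
    hence "{x, \<alpha> x} \<in> E - S" using \<open>{x, \<alpha> x} \<in> E\<close> by blast
    thus False using x by blast
  qed
next
  fix x assume "x \<in> \<Union>S"
  then obtain e where e: "e \<in> S" "x \<in> e" by auto
  have "x \<notin> \<Union>(E - S)" using E_disj e assms by blast
  moreover have "x \<in> D" using e assms E_sub by blast
  ultimately show "x \<in> D - \<Union>(E - S)" by blast
qed

lemma dual_circ:
  assumes "S \<subseteq> E" "D \<noteq> {}"
  shows "nbhd_circles (dual_vertices D \<alpha> \<sigma>) D (dual_vert \<alpha> \<sigma>) \<alpha> (dual_rotation \<alpha> \<sigma>) S = F (D - \<Union>S)"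
proof -
  let ?\<rho> = "\<sigma> \<circ> \<alpha>" and ?U = "\<Union>S"
  have rp: "?\<rho> permutes D" using permutes_compose[OF aperm sperm] .
  have cU: "closedA ?U" using E_closed[OF assms(1)] .
  interpret fr D ?\<rho> \<alpha> ?U S
    by unfold_locales (use finD rp aperm cU closedA_def in auto)
  have c: "ncyc (piA ?\<rho> \<alpha> ?U) D = card {orbit_of (sub_rotation ?\<rho> S \<circ> \<alpha>) d | d. d \<in> ?U}
            + card {Ob \<in> {orbit_of ?\<rho> d | d. d \<in> D}. Ob \<inter> ?U = {}}" by (rule count)
  have set2: "{v \<in> dual_vertices D \<alpha> \<sigma>. \<forall>d\<in>?U. dual_vert \<alpha> \<sigma> d \<noteq> v}
             = {Ob \<in> {orbit_of ?\<rho> d | d. d \<in> D}. Ob \<inter> ?U = {}}"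
  proof (intro set_eqI iffI)
    fix v assume "v \<in> {v \<in> dual_vertices D \<alpha> \<sigma>. \<forall>d\<in>?U. dual_vert \<alpha> \<sigma> d \<noteq> v}"
    then obtain x where x: "x \<in> D" "v = orbit_of ?\<rho> x" "\<forall>d\<in>?U. orbit_of ?\<rho> d \<noteq> v"
      unfolding dual_vertices_def dual_vert_def using assms(2) by auto
    have "v \<inter> ?U = {}"
    proof (rule ccontr)
      assume "v \<inter> ?U \<noteq> {}"
      then obtain d where "d \<in> v" "d \<in> ?U" by blast
      thus False using x orbit_of_eq[OF rp finD] by metis
    qed
    thus "v \<in> {Ob \<in> {orbit_of ?\<rho> d | d. d \<in> D}. Ob \<inter> ?U = {}}" using x by blast
  next
    fix v assume "v \<in> {Ob \<in> {orbit_of ?\<rho> d | d. d \<in> D}. Ob \<inter> ?U = {}}"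
    then obtain x where x: "x \<in> D" "v = orbit_of ?\<rho> x" "v \<inter> ?U = {}" by blast
    have "\<forall>d\<in>?U. orbit_of ?\<rho> d \<noteq> v"
    proof (intro ballI notI)
      fix d assume d: "d \<in> ?U" "orbit_of ?\<rho> d = v"
      have "d \<in> v" using self_in_orbit_of[of d ?\<rho>] d(2) by simp
      thus False using d(1) x(3) by blast
    qed
    thus "v \<in> {v \<in> dual_vertices D \<alpha> \<sigma>. \<forall>d\<in>?U. dual_vert \<alpha> \<sigma> d \<noteq> v}"
      unfolding dual_vertices_def dual_vert_def using x assms(2) by auto
  qed
  have nb: "nbhd_circles (dual_vertices D \<alpha> \<sigma>) D (dual_vert \<alpha> \<sigma>) \<alpha> (dual_rotation \<alpha> \<sigma>) S
      = ncyc (piA ?\<rho> \<alpha> ?U) D"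
    unfolding nbhd_circles_def dual_rotation_def c set2 by simp
  have conj: "ncyc (piA ?\<rho> \<alpha> ?U) D = F (D - ?U)"
  proof (rule conj_ncyc)
    fix x
    show "piA ?\<rho> \<alpha> ?U (\<alpha> x) = \<alpha> (piA \<sigma> \<alpha> (D - ?U) x)"
    proof (cases "x \<in> D")
      case True
      thus ?thesis unfolding piA_def by auto
    next
      case False
      hence "\<alpha> x = x" "\<sigma> x = x" using aperm sperm unfolding permutes_def by auto
      moreover have "x \<notin> ?U" using False cU closedA_def by auto
      ultimately show ?thesis unfolding piA_def by auto
    qed
  next
    show "inj \<alpha>" using permutes_inj[OF aperm] .
    show "\<alpha> ` D = D" using permutes_image[OF aperm] .
  qed
  show ?thesis using nb conj by simp
qed

lemma valence_sum:
  assumes "D \<noteq> {}"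
  shows "(\<Sum>v\<in>dual_vertices D \<alpha> \<sigma>. int (valence D (dual_vert \<alpha> \<sigma>) v) - 2)
         = int (card D) - 2 * int (card (dual_vertices D \<alpha> \<sigma>))"
proof -
  let ?g = "dual_vert \<alpha> \<sigma>"
  have DV: "dual_vertices D \<alpha> \<sigma> = ?g ` D" unfolding dual_vertices_def dual_vert_def using assms by auto
  have fin: "finite (?g ` D)" using finD by simp
  have "D = (\<Union>v\<in>?g ` D. {d \<in> D. ?g d = v})" by auto
  moreover have "card (\<Union>v\<in>?g ` D. {d \<in> D. ?g d = v}) = (\<Sum>v\<in>?g ` D. card {d \<in> D. ?g d = v})"
    by (rule card_UN_disjoint) (use fin finD in auto)
  ultimately have "card D = (\<Sum>v\<in>?g ` D. card {d \<in> D. ?g d = v})" by simp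
  hence "(\<Sum>v\<in>dual_vertices D \<alpha> \<sigma>. int (valence D ?g v)) = int (card D)"
    unfolding DV valence_def by (metis of_nat_sum)
  thus ?thesis by (simp add: sum_subtractf)
qed

end

locale pg = rg +
  assumes plane: "plane_graph V D vert \<alpha> \<sigma>" and Dne: "D \<noteq> {}"
begin

lemma conn: "u \<in> V \<Longrightarrow> v \<in> V \<Longrightarrow> (u, v) \<in> (R D)\<^sup>*"
  using plane unfolding plane_graph_def graph_connected_def relA_def by auto

lemma Vne: "V \<noteq> {}" using plane unfolding plane_graph_def by auto

lemma vdarts: assumes "v \<in> V" shows "\<exists>d\<in>D. vert d = v"
proof -
  obtain d0 where d0: "d0 \<in> D" using Dne by auto
  have "(v, vert d0) \<in> (R D)\<^sup>*" using conn assms vertD[OF d0] by blast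
  thus ?thesis
  proof (cases rule: converse_rtranclE)
    case base thus ?thesis using d0 by auto
  next
    case (step y)
    thus ?thesis unfolding relA_def by auto
  qed
qed

lemma sorb: assumes "d \<in> D" shows "orbit_of \<sigma> d = {d' \<in> D. vert d' = vert d}"
proof
  show "orbit_of \<sigma> d \<subseteq> {d' \<in> D. vert d' = vert d}"
  proof (rule orbit_of_closed)
    show "\<forall>y\<in>{d' \<in> D. vert d' = vert d}. \<sigma> y \<in> {d' \<in> D. vert d' = vert d}" using vs by auto
  qed (use assms in auto)
  show "{d' \<in> D. vert d' = vert d} \<subseteq> orbit_of \<sigma> d"
  proof
    fix x assume "x \<in> {d' \<in> D. vert d' = vert d}"
    then obtain k where "(\<sigma> ^^ k) d = x" using vorb[OF assms] by force
    thus "x \<in> orbit_of \<sigma> d" unfolding orbit_of_def by blast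
  qed
qed

lemma F0: "F {} = card V"
proof -
  have p: "piA \<sigma> \<alpha> {} = \<sigma>" unfolding piA_def by auto
  have eq: "{orbit_of \<sigma> d | d. d \<in> D} = (\<lambda>v. {d' \<in> D. vert d' = v}) ` V"
  proof (intro set_eqI iffI)
    fix S assume "S \<in> {orbit_of \<sigma> d | d. d \<in> D}"
    then obtain d where "d \<in> D" "S = orbit_of \<sigma> d" by blast
    thus "S \<in> (\<lambda>v. {d' \<in> D. vert d' = v}) ` V" using sorb vertD by blast
  next
    fix S assume "S \<in> (\<lambda>v. {d' \<in> D. vert d' = v}) ` V"
    then obtain v where v: "v \<in> V" "S = {d' \<in> D. vert d' = v}" by blast
    then obtain d where "d \<in> D" "vert d = v" using vdarts by blast
    thus "S \<in> {orbit_of \<sigma> d | d. d \<in> D}" using sorb v by auto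
  qed
  have "inj_on (\<lambda>v. {d' \<in> D. vert d' = v}) V"
  proof (rule inj_onI)
    fix u v assume "u \<in> V" "v \<in> V" "{d' \<in> D. vert d' = u} = {d' \<in> D. vert d' = v}"
    thus "u = v" using vdarts by blast
  qed
  thus ?thesis unfolding ncyc_def p eq by (simp add: card_image)
qed

lemma k0: "kk {} = card V"
proof -
  have "R {} = {}" unfolding relA_def by auto
  hence "comps V vert \<alpha> {} = (\<lambda>x. {x}) ` V" unfolding comps_def by simp
  thus ?thesis by (simp add: card_image)
qed

lemma kD: "kk D = 1"
proof -
  have cD: "closedA D" unfolding closedA_def by auto
  have "comps V vert \<alpha> D = {V}"
  proof -
    have "(R D)\<^sup>* `` {x} = V" if "x \<in> V" for x
      using img_V[OF cD that] conn[OF that] by auto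
    thus ?thesis unfolding comps_def using Vne by auto
  qed
  thus ?thesis by simp
qed

lemma FD: "int (card V) - int (card E) + int (F D) = 2"
proof -
  have cD: "closedA D" unfolding closedA_def by auto
  interpret fr D \<sigma> \<alpha> D E
    by unfold_locales (use finD sperm aperm UE in auto)
  have c: "F D = card {orbit_of (sub_rotation \<sigma> E \<circ> \<alpha>) d | d. d \<in> D}
                + card {Ob \<in> {orbit_of \<sigma> d | d. d \<in> D}. Ob \<inter> D = {}}" using count by simp
  have z1: "{Ob \<in> {orbit_of \<sigma> d | d. d \<in> D}. Ob \<inter> D = {}} = {}"
  proof -
    have "orbit_of \<sigma> d \<inter> D \<noteq> {}" if "d \<in> D" for d using that self_in_orbit_of[of d \<sigma>] by blast
    thus ?thesis by blast
  qed
  have z2: "{v \<in> V. \<forall>d\<in>D. vert d \<noteq> v} = {}" using vdarts by blast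
  have "nbhd_circles V D vert \<alpha> \<sigma> E = F D" unfolding nbhd_circles_def UE c z1 z2 by simp
  thus ?thesis using plane unfolding plane_graph_def by simp
qed

lemma delta_zero: assumes "closedA A" shows "delta A = 0"
proof -
  have d0: "delta {} = 0" unfolding delta_def using F0 k0 by simp
  have cD: "closedA D" unfolding closedA_def by auto
  have dD: "delta D = 0" unfolding delta_def using FD kD cardD by simp
  show ?thesis using delta_lower[OF assms] delta_upper[OF assms] d0 dD by simp
qed

end

context rg begin

definition Mono :: "nat \<Rightarrow> 'd set \<Rightarrow> ('v \<Rightarrow> nat) set" where
  "Mono Q A = {c \<in> V \<rightarrow>\<^sub>E {0..<Q}. \<forall>d\<in>A. c (vert d) = c (vert (\<alpha> d))}"

lemma eqimg:
  assumes "closedA A" "(x, y) \<in> (R A)\<^sup>*"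
  shows "(R A)\<^sup>* `` {x} = (R A)\<^sup>* `` {y}"
  using assms(2) rtr_sym[OF assms] by (auto intro: rtrancl_trans)

lemma card_Mono:
  assumes "closedA A"
  shows "card (Mono Q A) = Q ^ kk A"
proof -
  let ?K = "comps V vert \<alpha> A" and ?S = "(R A)\<^sup>*"
  define \<phi> where "\<phi> g = (\<lambda>x\<in>V. g (?S `` {x}))" for g :: "'v set \<Rightarrow> nat"
  have inj: "inj_on \<phi> (?K \<rightarrow>\<^sub>E {0..<Q})"
  proof (rule inj_onI)
    fix g1 g2 assume g: "g1 \<in> ?K \<rightarrow>\<^sub>E {0..<Q}" "g2 \<in> ?K \<rightarrow>\<^sub>E {0..<Q}" "\<phi> g1 = \<phi> g2"
    show "g1 = g2"
    proof (rule PiE_ext[OF g(1,2)])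
      fix C assume "C \<in> ?K"
      then obtain x where x: "x \<in> V" "C = ?S `` {x}" unfolding comps_def by auto
      have "\<phi> g1 x = \<phi> g2 x" using g(3) by simp
      thus "g1 C = g2 C" using x unfolding \<phi>_def by simp
    qed
  qed
  have img: "\<phi> ` (?K \<rightarrow>\<^sub>E {0..<Q}) = Mono Q A"
  proof (intro set_eqI iffI)
    fix c assume "c \<in> \<phi> ` (?K \<rightarrow>\<^sub>E {0..<Q})"
    then obtain g where g: "g \<in> ?K \<rightarrow>\<^sub>E {0..<Q}" "c = \<phi> g" by blast
    have "c \<in> V \<rightarrow>\<^sub>E {0..<Q}"
    proof
      fix x assume "x \<in> V"
      hence "?S `` {x} \<in> ?K" unfolding comps_def by blast
      thus "c x \<in> {0..<Q}" using g \<open>x \<in> V\<close> unfolding \<phi>_def by auto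
    next
      fix x assume "x \<notin> V" thus "c x = undefined" using g unfolding \<phi>_def by simp
    qed
    moreover have "\<forall>d\<in>A. c (vert d) = c (vert (\<alpha> d))"
    proof
      fix d assume d: "d \<in> A"
      have dD: "d \<in> D" "\<alpha> d \<in> D" using d assms closedA_def by auto
      have "(vert d, vert (\<alpha> d)) \<in> R A" using d unfolding relA_def by auto
      hence "?S `` {vert d} = ?S `` {vert (\<alpha> d)}" using eqimg[OF assms] by blast
      thus "c (vert d) = c (vert (\<alpha> d))" using g(2) vertD dD unfolding \<phi>_def by simp
    qed
    ultimately show "c \<in> Mono Q A" unfolding Mono_def by blast
  next
    fix c assume c: "c \<in> Mono Q A"
    have const: "(x, y) \<in> ?S \<Longrightarrow> c x = c y" for x y
    proof (induction rule: rtrancl_induct)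
      case (step y z)
      then obtain d where "d \<in> A" "y = vert d" "z = vert (\<alpha> d)" unfolding relA_def by auto
      thus ?case using step c unfolding Mono_def by auto
    qed simp
    define g where "g = (\<lambda>C\<in>?K. c (SOME x. x \<in> C))"
    have some: "(SOME y. y \<in> ?S `` {x}) \<in> ?S `` {x}" for x by (rule someI[of _ x]) simp
    have gx: "g (?S `` {x}) = c x" if "x \<in> V" for x
    proof -
      have "?S `` {x} \<in> ?K" using that unfolding comps_def by blast
      hence "g (?S `` {x}) = c (SOME y. y \<in> ?S `` {x})" unfolding g_def by simp
      also have "\<dots> = c x" using const some[of x] by simp
      finally show ?thesis .
    qed
    have "g \<in> ?K \<rightarrow>\<^sub>E {0..<Q}"
    proof
      fix C assume "C \<in> ?K"
      then obtain x where x: "x \<in> V" "C = ?S `` {x}" unfolding comps_def by auto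
      thus "g C \<in> {0..<Q}" using gx c unfolding Mono_def by auto
    next
      fix C assume "C \<notin> ?K" thus "g C = undefined" unfolding g_def by simp
    qed
    moreover have "\<phi> g = c"
    proof
      fix x show "\<phi> g x = c x"
        using gx c unfolding \<phi>_def Mono_def by (cases "x \<in> V") (auto simp: PiE_def extensional_def)
    qed
    ultimately show "c \<in> \<phi> ` (?K \<rightarrow>\<^sub>E {0..<Q})" by blast
  qed
  have "card (Mono Q A) = card (?K \<rightarrow>\<^sub>E {0..<Q})" using card_image[OF inj] img by simp
  also have "\<dots> = Q ^ kk A" using fin_comps by (simp add: card_PiE)
  finally show ?thesis .
qed

lemma mono_edge:
  assumes "e \<in> E"
  shows "(\<forall>d\<in>e. c (vert d) = c (vert (\<alpha> d))) \<longleftrightarrow> (\<exists>d\<in>e. c (vert d) = c (vert (\<alpha> d)))"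
proof -
  obtain d where d: "d \<in> D" "e = {d, \<alpha> d}" using assms unfolding E_img by blast
  thus ?thesis by auto
qed

lemma card_proper:
  "int (card (proper_colorings V D vert \<alpha> Q)) = (\<Sum>S\<in>Pow E. (-1) ^ card S * int Q ^ kk (\<Union>S))"
proof -
  let ?All = "V \<rightarrow>\<^sub>E {0..<Q}"
  define m where "m c e = (\<forall>d\<in>e. c (vert d) = c (vert (\<alpha> d)))" for c :: "'v \<Rightarrow> nat" and e
  have finAll: "finite ?All" using finV by (simp add: finite_PiE)
  have proper: "c \<in> proper_colorings V D vert \<alpha> Q \<longleftrightarrow> c \<in> ?All \<and> (\<forall>e\<in>E. \<not> m c e)" for c
  proof -
    have "(\<forall>d\<in>D. c (vert d) \<noteq> c (vert (\<alpha> d))) \<longleftrightarrow> (\<forall>e\<in>E. \<not> m c e)"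
    proof
      assume A: "\<forall>d\<in>D. c (vert d) \<noteq> c (vert (\<alpha> d))"
      show "\<forall>e\<in>E. \<not> m c e"
      proof (intro ballI)
        fix e assume e: "e \<in> E"
        then obtain d where "d \<in> D" "e = {d, \<alpha> d}" unfolding E_img by blast
        thus "\<not> m c e" using A unfolding m_def by auto
      qed
    next
      assume A: "\<forall>e\<in>E. \<not> m c e"
      show "\<forall>d\<in>D. c (vert d) \<noteq> c (vert (\<alpha> d))"
      proof (intro ballI notI)
        fix d assume d: "d \<in> D" "c (vert d) = c (vert (\<alpha> d))"
        have e: "{d, \<alpha> d} \<in> E" unfolding E_img using d by blast
        have "m c {d, \<alpha> d}" unfolding m_def using d by auto
        thus False using A e by blast
      qed
    qed
    thus ?thesis unfolding proper_colorings_def by blast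
  qed
  have ind: "(of_bool (c \<in> proper_colorings V D vert \<alpha> Q) :: int)
        = (\<Sum>S\<in>Pow E. (-1) ^ card S * of_bool (c \<in> Mono Q (\<Union>S)))" if c: "c \<in> ?All" for c
  proof -
    have "(of_bool (c \<in> proper_colorings V D vert \<alpha> Q) :: int) = (\<Prod>e\<in>E. (- of_bool (m c e)) + 1)"
      using proper c finE by (auto simp: prod_zero_iff)
    also have "\<dots> = (\<Sum>S\<in>Pow E. (\<Prod>e\<in>S. - of_bool (m c e)) * (\<Prod>e\<in>E - S. 1))"
      by (rule prod_add[OF finE])
    also have "\<dots> = (\<Sum>S\<in>Pow E. (-1) ^ card S * of_bool (c \<in> Mono Q (\<Union>S)))"
    proof (rule sum.cong[OF refl])
      fix S assume S: "S \<in> Pow E"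
      have fS: "finite S" using S finE finite_subset by blast
      have "(\<Prod>e\<in>S. - (of_bool (m c e) :: int)) = (\<Prod>e\<in>S. (-1::int) * of_bool (m c e))" by simp
      also have "\<dots> = (\<Prod>e\<in>S. (-1::int)) * (\<Prod>e\<in>S. of_bool (m c e))"
        by (rule prod.distrib)
      also have "(\<Prod>e\<in>S. (-1::int)) = (-1) ^ card S" by simp
      also have "(\<Prod>e\<in>S. (of_bool (m c e) :: int)) = of_bool (\<forall>e\<in>S. m c e)"
        using fS by (induction S rule: finite_induct) auto
      also have "(\<forall>e\<in>S. m c e) \<longleftrightarrow> c \<in> Mono Q (\<Union>S)"
        using c unfolding Mono_def m_def by auto
      finally have X: "(\<Prod>e\<in>S. - (of_bool (m c e) :: int)) = (-1) ^ card S * of_bool (c \<in> Mono Q (\<Union>S))" .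
      show "(\<Prod>e\<in>S. - of_bool (m c e)) * (\<Prod>e\<in>E - S. 1) = ((-1) ^ card S * of_bool (c \<in> Mono Q (\<Union>S)) :: int)"
        unfolding prod.neutral_const mult_1_right by (rule X)
    qed
    finally show ?thesis .
  qed
  have "int (card (proper_colorings V D vert \<alpha> Q)) = (\<Sum>c\<in>?All. (of_bool (c \<in> proper_colorings V D vert \<alpha> Q) :: int))"
  proof -
    have sub: "proper_colorings V D vert \<alpha> Q \<subseteq> ?All" using proper by blast
    have "(\<Sum>c\<in>?All. (of_bool (c \<in> proper_colorings V D vert \<alpha> Q) :: int))
          = (\<Sum>c\<in>proper_colorings V D vert \<alpha> Q. 1)"
      using sub finAll by (simp add: sum.inter_restrict[symmetric] Int_absorb1 of_bool_def)
    thus ?thesis by simp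
  qed
  also have "\<dots> = (\<Sum>c\<in>?All. \<Sum>S\<in>Pow E. (-1) ^ card S * of_bool (c \<in> Mono Q (\<Union>S)))"
    using ind by (rule sum.cong[OF refl])
  also have "\<dots> = (\<Sum>S\<in>Pow E. \<Sum>c\<in>?All. (-1) ^ card S * of_bool (c \<in> Mono Q (\<Union>S)))"
    by (rule sum.swap)
  also have "\<dots> = (\<Sum>S\<in>Pow E. (-1) ^ card S * int Q ^ kk (\<Union>S))"
  proof (rule sum.cong[OF refl])
    fix S assume S: "S \<in> Pow E"
    have sub: "Mono Q (\<Union>S) \<subseteq> ?All" unfolding Mono_def by blast
    have "(\<Sum>c\<in>?All. (of_bool (c \<in> Mono Q (\<Union>S)) :: int)) = int (card (Mono Q (\<Union>S)))"
      using sub finAll by (simp add: sum.inter_restrict[symmetric] Int_absorb1 of_bool_def)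
    also have "\<dots> = int Q ^ kk (\<Union>S)" using card_Mono[OF E_closed] S by simp
    finally show "(\<Sum>c\<in>?All. (-1) ^ card S * of_bool (c \<in> Mono Q (\<Union>S))) = (-1) ^ card S * int Q ^ kk (\<Union>S)"
      by (simp add: sum_distrib_left[symmetric])
  qed
  finally show ?thesis .
qed

definition cpoly :: "int poly" where
  "cpoly = (\<Sum>S\<in>Pow E. smult ((-1) ^ card S) (monom 1 (kk (\<Union>S))))"

lemma poly_cpoly: "poly cpoly (of_nat Q) = int (card (proper_colorings V D vert \<alpha> Q))"
  unfolding cpoly_def card_proper by (simp add: poly_sum poly_monom)

lemma chromatic_eq: "chromatic_poly V D vert \<alpha> = cpoly"
  unfolding chromatic_poly_def
proof (rule the_equality)
  show "\<forall>Q. poly cpoly (int Q) = int (card (proper_colorings V D vert \<alpha> Q))" using poly_cpoly by simp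
next
  fix p assume p: "\<forall>Q. poly p (int Q) = int (card (proper_colorings V D vert \<alpha> Q))"
  show "p = cpoly"
  proof (rule ccontr)
    assume "p \<noteq> cpoly"
    hence "p - cpoly \<noteq> 0" by simp
    hence fin: "finite {x. poly (p - cpoly) x = 0}" by (rule poly_roots_finite)
    have "range int \<subseteq> {x. poly (p - cpoly) x = 0}" using p poly_cpoly by auto
    hence "finite (range int)" using finite_subset fin by blast
    moreover have "inj int" by (simp add: inj_def)
    ultimately have "finite (UNIV :: nat set)" using finite_imageD by blast
    thus False by simp
  qed
qed

lemma chromatic_eval:
  fixes x :: "'a :: comm_ring_1"
  shows "poly (map_poly of_int (chromatic_poly V D vert \<alpha>)) x = (\<Sum>S\<in>Pow E. (-1) ^ card S * x ^ kk (\<Union>S))"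
proof -
  have "map_poly of_int cpoly = (\<Sum>S\<in>Pow E. smult ((-1) ^ card S) (monom (1::'a) (kk (\<Union>S))))"
  proof (rule poly_eqI)
    fix n
    show "coeff (map_poly of_int cpoly) n = coeff (\<Sum>S\<in>Pow E. smult ((-1) ^ card S) (monom (1::'a) (kk (\<Union>S)))) n"
      unfolding cpoly_def by (simp add: coeff_map_poly coeff_sum of_int_sum) (rule sum.cong, simp_all)
  qed
  thus ?thesis unfolding chromatic_eq by (simp add: poly_sum poly_monom)
qed

end



definition lowv :: "int \<Rightarrow> rat fls \<Rightarrow> bool" where
  "lowv L x \<longleftrightarrow> (\<forall>n<L. x $$ n = 0)"

lemma lowv_mono: "L' \<le> L \<Longrightarrow> lowv L x \<Longrightarrow> lowv L' x"
  unfolding lowv_def by auto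

lemma lowv_0[simp]: "lowv L 0" unfolding lowv_def by simp
lemma lowv_1: "lowv 0 1" unfolding lowv_def by simp

lemma lowv_add: "lowv L x \<Longrightarrow> lowv L y \<Longrightarrow> lowv L (x + y)" unfolding lowv_def by simp
lemma lowv_uminus: "lowv L x \<Longrightarrow> lowv L (- x)" unfolding lowv_def by simp
lemma lowv_diff: "lowv L x \<Longrightarrow> lowv L y \<Longrightarrow> lowv L (x - y)" unfolding lowv_def by simp
lemma lowv_sum: "(\<And>a. a \<in> A \<Longrightarrow> lowv L (f a)) \<Longrightarrow> lowv L (\<Sum>a\<in>A. f a)"
  unfolding lowv_def by (simp add: fls_nth_sum)

lemma lowv_sub: assumes "x \<noteq> 0" "lowv L x" shows "L \<le> fls_subdegree x"
proof (rule ccontr)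
  assume "\<not> L \<le> fls_subdegree x"
  hence "x $$ fls_subdegree x = 0" using assms(2) unfolding lowv_def by auto
  thus False using assms(1) by simp
qed

lemma lowv_mult: assumes "lowv a x" "lowv b y" shows "lowv (a + b) (x * y)"
proof (cases "x = 0 \<or> y = 0")
  case False
  hence "a \<le> fls_subdegree x" "b \<le> fls_subdegree y" using lowv_sub assms by auto
  thus ?thesis unfolding lowv_def by (auto intro: fls_times_nth_eq0)
qed auto

lemma lowv_pow: "lowv a x \<Longrightarrow> lowv (int k * a) (x ^ k)"
proof (induction k)
  case 0 thus ?case using lowv_1 by simp
next
  case (Suc k)
  have "lowv (a + int k * a) (x * x ^ k)" using lowv_mult[OF Suc(2) Suc(1)[OF Suc(2)]] .
  thus ?case by (simp add: algebra_simps)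
qed

lemma lowv_sign: "lowv 0 ((-1) ^ k)"
  using lowv_pow[of 0 "-1" k] lowv_uminus[OF lowv_1] by simp

definition Xp :: "int \<Rightarrow> rat fls" where "Xp k = fls_X_intpow k"

lemma Xp_nth: "Xp k $$ n = (if n = k then 1 else 0)"
  unfolding Xp_def by simp

lemma Xp_powi: "(fls_X :: rat fls) powi k = Xp k"
  unfolding Xp_def by simp

lemma Xp_add: "Xp (a + b) = Xp a * Xp b"
  unfolding Xp_def by (simp add: fls_X_intpow_times_fls_X_intpow)

lemma Xp_0: "Xp 0 = 1" unfolding Xp_def by simp

lemma Xp_nz: "Xp k \<noteq> 0" unfolding Xp_def by simp

lemma lowv_X: "lowv k (Xp k)"
  unfolding lowv_def Xp_nth by simp

lemma qq_nth: "qq $$ n = (if n = 1 \<or> n = -1 then 1 else 0)"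
  unfolding qq_def by auto

lemma lowv_qq: "lowv (-1) qq" unfolding lowv_def qq_nth by auto

lemma qq_nz: "qq \<noteq> 0"
proof
  assume "qq = 0"
  hence "qq $$ (-1) = 0" by simp
  thus False unfolding qq_nth by simp
qed

lemma qq_subdeg: "fls_subdegree qq = -1"
  by (rule fls_subdegree_eqI) (auto simp: qq_nth)

lemma lowv_inv_qq: "lowv 1 (inverse qq)"
  unfolding lowv_def using qq_subdeg by auto

lemma lowv_qq_pow: "lowv (- int k) (qq ^ k)"
  using lowv_pow[OF lowv_qq, of k] by simp

lemma Xp_sum: "finite A \<Longrightarrow> Xp (\<Sum>a\<in>A. f a) = (\<Prod>a\<in>A. Xp (f a))"
  by (induction A rule: finite_induct) (auto simp: Xp_add Xp_0)

lemma qq_Xp: "qq = Xp 1 + Xp (-1)"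
  by (rule fls_eqI) (simp add: qq_nth Xp_nth)

lemma qq_mult_X: "qq * Xp j = Xp (j + 1) + Xp (j - 1)"
proof -
  have "qq * Xp j = Xp 1 * Xp j + Xp (-1) * Xp j"
    unfolding qq_Xp by (simp add: distrib_right)
  also have "\<dots> = Xp (1 + j) + Xp (-1 + j)" by (simp only: Xp_add)
  finally show ?thesis by (simp add: add.commute)
qed

definition gs :: "nat \<Rightarrow> rat fls" where
  "gs M = (\<Sum>k\<in>{1..M}. (-1) ^ k * Xp (2 * int k - 1))"

lemma qq_gs: "qq * gs M = -1 + (-1) ^ M * Xp (2 * int M)"
proof (induction M)
  case 0 thus ?case unfolding gs_def by (simp add: Xp_0)
next
  case (Suc M)
  have "gs (Suc M) = gs M + (-1) ^ Suc M * Xp (2 * int (Suc M) - 1)"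
    unfolding gs_def by simp
  hence "qq * gs (Suc M) = qq * gs M + (-1) ^ Suc M * (qq * Xp (2 * int (Suc M) - 1))"
    by (simp only: distrib_left mult.left_commute)
  also have "\<dots> = -1 + (-1) ^ M * Xp (2 * int M)
      + (-1) ^ Suc M * (Xp (2 * int (Suc M)) + Xp (2 * int M))"
    unfolding Suc qq_mult_X by (simp add: algebra_simps add.commute)
  also have "\<dots> = -1 + (-1) ^ Suc M * Xp (2 * int (Suc M))" by (simp add: algebra_simps)
  finally show ?case .
qed

lemma gs_diff: "gs M - (- inverse qq) = (-1) ^ M * Xp (2 * int M) * inverse qq"
proof -
  have "gs M = inverse qq * (qq * gs M)" using qq_nz by simp
  also have "\<dots> = inverse qq * (-1 + (-1) ^ M * Xp (2 * int M))" unfolding qq_gs ..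
  finally show ?thesis by (simp add: algebra_simps)
qed

lemma lowv_gs: "lowv 1 (gs M)"
  unfolding gs_def
proof (rule lowv_sum)
  fix k assume "k \<in> {1..M}"
  hence "lowv (0 + (2 * int k - 1)) ((-1) ^ k * Xp (2 * int k - 1))"
    by (intro lowv_mult lowv_sign lowv_X)
  moreover have "1 \<le> 0 + (2 * int k - 1)" using \<open>k \<in> {1..M}\<close> by auto
  ultimately show "lowv 1 ((-1) ^ k * Xp (2 * int k - 1))" by (rule lowv_mono[rotated])
qed

lemma lowv_gs_diff: "lowv (2 * int M + 1) (gs M - (- inverse qq))"
proof -
  have "lowv (0 + 2 * int M + 1) ((-1) ^ M * Xp (2 * int M) * inverse qq)"
    by (intro lowv_mult lowv_sign lowv_X lowv_inv_qq)
  thus ?thesis unfolding gs_diff by simp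
qed

lemma lowv_pow_diff:
  assumes "lowv 0 a" "lowv 0 b" "lowv L (a - b)"
  shows "lowv L (a ^ j - b ^ j)"
proof (induction j)
  case (Suc j)
  have eq: "a ^ Suc j - b ^ Suc j = a * (a ^ j - b ^ j) + (a - b) * b ^ j" by (simp add: algebra_simps)
  have "lowv (0 + L) (a * (a ^ j - b ^ j))" by (rule lowv_mult[OF assms(1) Suc])
  moreover have "lowv (L + int j * 0) ((a - b) * b ^ j)" by (rule lowv_mult[OF assms(3) lowv_pow[OF assms(2)]])
  ultimately show ?case unfolding eq by (auto intro: lowv_add)
qed simp



locale fsum =
  fixes E :: "'e set" and c :: "'e set \<Rightarrow> nat"
  assumes finE: "finite E"
begin

definition s :: "nat \<Rightarrow> int" where "s k = (if k = 0 then 0 else 2 * int k - 1)"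
definition trm :: "('e \<Rightarrow> nat) \<Rightarrow> rat fls" where
  "trm n = Xp (\<Sum>e\<in>E. s (n e)) * qq ^ c {e \<in> E. n e = 0}"
definition st :: "nat \<Rightarrow> ('e \<Rightarrow> nat) set" where
  "st i = {n \<in> E \<rightarrow>\<^sub>E UNIV. (\<Sum>e\<in>E. n e) = i}"
definition T :: "nat \<Rightarrow> rat fls" where
  "T i = (-1) ^ i * (\<Sum>n\<in>st i. trm n)"
definition Cb :: nat where "Cb = (\<Sum>B\<in>Pow E. c B)"
definition Lo :: "nat \<Rightarrow> ('e \<Rightarrow> nat) set" where "Lo K = {n \<in> E \<rightarrow>\<^sub>E UNIV. (\<Sum>e\<in>E. n e) < K}"
definition Bx :: "nat \<Rightarrow> ('e \<Rightarrow> nat) set" where "Bx K = E \<rightarrow>\<^sub>E {..<K}"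
definition f :: "('e \<Rightarrow> nat) \<Rightarrow> rat fls" where "f n = (-1) ^ (\<Sum>e\<in>E. n e) * trm n"

lemma c_le: "B \<subseteq> E \<Longrightarrow> c B \<le> Cb"
  unfolding Cb_def by (rule member_le_sum) (use finE in auto)

lemma s_ge: "int k \<le> s k" unfolding s_def by auto

lemma lowv_trm: "lowv (int (\<Sum>e\<in>E. n e) - int Cb) (trm n)"
proof -
  have "lowv ((\<Sum>e\<in>E. s (n e)) + - int (c {e \<in> E. n e = 0})) (trm n)"
    unfolding trm_def by (intro lowv_mult lowv_X lowv_qq_pow)
  moreover have "int (\<Sum>e\<in>E. n e) \<le> (\<Sum>e\<in>E. s (n e))"
    unfolding of_nat_sum by (rule sum_mono) (rule s_ge)
  moreover have "c {e \<in> E. n e = 0} \<le> Cb" by (rule c_le) auto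
  ultimately show ?thesis by (elim lowv_mono[rotated]) linarith
qed

lemma lowv_f: "lowv (int (\<Sum>e\<in>E. n e) - int Cb) (f n)"
  using lowv_mult[OF lowv_sign lowv_trm] unfolding f_def by simp

lemma le_sum_n: fixes n :: "'e \<Rightarrow> nat" assumes "e \<in> E" shows "n e \<le> (\<Sum>e\<in>E. n e)"
  using member_le_sum[of e E n] finE assms by auto

lemma fin_st: "finite (st i)"
proof -
  have "st i \<subseteq> E \<rightarrow>\<^sub>E {..i}" unfolding st_def using le_sum_n by (auto simp: PiE_def Pi_def)
  thus ?thesis using finite_PiE[OF finE, of "\<lambda>_. {..i}"] finite_subset by blast
qed

lemma lowv_T: "lowv (int i - int Cb) (T i)"
proof -
  have "lowv (int i - int Cb) (\<Sum>n\<in>st i. trm n)"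
    by (rule lowv_sum) (use lowv_trm st_def in auto)
  thus ?thesis using lowv_mult[OF lowv_sign] unfolding T_def by fastforce
qed

lemma Lo_sub: "Lo K \<subseteq> Bx K"
proof
  fix n assume "n \<in> Lo K"
  hence n: "n \<in> E \<rightarrow>\<^sub>E UNIV" "(\<Sum>e\<in>E. n e) < K" unfolding Lo_def by auto
  have "n e < K" if "e \<in> E" for e using le_sum_n[OF that, of n] n(2) by simp
  thus "n \<in> Bx K" unfolding Bx_def using n(1) by (auto simp: PiE_iff)
qed

lemma fin_Bx: "finite (Bx K)" unfolding Bx_def using finE by (simp add: finite_PiE)
lemma fin_Lo: "finite (Lo K)" using Lo_sub fin_Bx finite_subset by blast

lemma seq_nth:
  assumes "int K > m + int Cb"
  shows "fls_seq_sum T $$ m = (\<Sum>i<K. T i $$ m)"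
proof -
  define g where "g m = (\<Sum>i\<in>{i. T i $$ m \<noteq> 0}. T i $$ m)" for m
  have z: "T i $$ m' = 0" if "m' < int i - int Cb" for i m' using lowv_T that unfolding lowv_def by blast
  have "\<forall>\<^sub>\<infinity> n::nat. g (- int n) = 0"
    unfolding MOST_nat
  proof (intro exI allI impI)
    fix n assume "n > Cb"
    hence "{i. T i $$ (- int n) \<noteq> 0} = {}" using z by force
    thus "g (- int n) = 0" unfolding g_def by simp
  qed
  hence nth: "fls_seq_sum T $$ m = g m"
    unfolding fls_seq_sum_def g_def[symmetric] by (simp add: Abs_fls_inverse)
  have sub: "{i. T i $$ m \<noteq> 0} \<subseteq> {..<K}"
  proof
    fix i assume "i \<in> {i. T i $$ m \<noteq> 0}"
    hence "\<not> m < int i - int Cb" using z by auto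
    thus "i \<in> {..<K}" using assms by auto
  qed
  have "g m = (\<Sum>i<K. T i $$ m)" unfolding g_def
    by (rule sum.mono_neutral_left) (use sub in auto)
  thus ?thesis using nth by simp
qed

lemma sumT: "(\<Sum>i<K. T i) = (\<Sum>n\<in>Lo K. f n)"
proof -
  have "(\<Sum>n\<in>Lo K. f n) = (\<Sum>i<K. \<Sum>n\<in>{n \<in> Lo K. (\<Sum>e\<in>E. n e) = i}. f n)"
    by (rule sum.group[symmetric]) (use fin_Lo in \<open>auto simp: Lo_def\<close>)
  also have "\<dots> = (\<Sum>i<K. T i)"
  proof (rule sum.cong[OF refl])
    fix i assume i: "i \<in> {..<K}"
    have "{n \<in> Lo K. (\<Sum>e\<in>E. n e) = i} = st i" unfolding Lo_def st_def using i by auto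
    hence "(\<Sum>n\<in>{n \<in> Lo K. (\<Sum>e\<in>E. n e) = i}. f n) = (\<Sum>n\<in>st i. (-1) ^ i * trm n)"
      unfolding f_def by (intro sum.cong) (auto simp: st_def)
    thus "(\<Sum>n\<in>{n \<in> Lo K. (\<Sum>e\<in>E. n e) = i}. f n) = T i" unfolding T_def by (simp add: sum_distrib_left)
  qed
  finally show ?thesis by simp
qed

lemma box_nth:
  assumes "m < int K - int Cb"
  shows "(\<Sum>n\<in>Bx K. f n) $$ m = (\<Sum>n\<in>Lo K. f n) $$ m"
proof -
  have "(\<Sum>n\<in>Bx K. f n) = (\<Sum>n\<in>Bx K - Lo K. f n) + (\<Sum>n\<in>Lo K. f n)"
    by (rule sum.subset_diff[OF Lo_sub fin_Bx])
  moreover have "(\<Sum>n\<in>Bx K - Lo K. f n) $$ m = 0"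
  proof -
    have "lowv (int K - int Cb) (\<Sum>n\<in>Bx K - Lo K. f n)"
    proof (rule lowv_sum)
      fix n assume n: "n \<in> Bx K - Lo K"
      hence "K \<le> (\<Sum>e\<in>E. n e)" unfolding Bx_def Lo_def by (auto simp: PiE_def)
      hence "int K \<le> int (\<Sum>e\<in>E. n e)" by linarith
      thus "lowv (int K - int Cb) (f n)" using lowv_f[of n] by (elim lowv_mono[rotated]) linarith
    qed
    thus ?thesis using assms unfolding lowv_def by auto
  qed
  ultimately show ?thesis by simp
qed

definition u :: "nat \<Rightarrow> rat fls" where "u k = (-1) ^ k * Xp (s k)"
definition w :: "'e set \<Rightarrow> 'e \<Rightarrow> nat \<Rightarrow> rat fls" where
  "w B e k = (if (k = 0) = (e \<in> B) then u k else 0)"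

lemma f_prod: "f n = (\<Prod>e\<in>E. u (n e)) * qq ^ c {e \<in> E. n e = 0}"
proof -
  have "f n = ((\<Prod>e\<in>E. (-1) ^ n e) * (\<Prod>e\<in>E. Xp (s (n e)))) * qq ^ c {e \<in> E. n e = 0}"
    unfolding f_def trm_def power_sum Xp_sum[OF finE] by (simp add: mult.assoc)
  also have "(\<Prod>e\<in>E. (-1) ^ n e) * (\<Prod>e\<in>E. Xp (s (n e))) = (\<Prod>e\<in>E. u (n e))"
    unfolding u_def by (rule prod.distrib[symmetric])
  finally show ?thesis .
qed

lemma w_prod:
  assumes "B \<subseteq> E"
  shows "(if {e \<in> E. n e = 0} = B then \<Prod>e\<in>E. u (n e) else 0) = (\<Prod>e\<in>E. w B e (n e))"
proof (cases "{e \<in> E. n e = 0} = B")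
  case True
  hence "\<forall>e\<in>E. (n e = 0) = (e \<in> B)" by auto
  thus ?thesis using True unfolding w_def by (auto intro: prod.cong)
next
  case False
  then obtain e where e: "e \<in> E" "(n e = 0) \<noteq> (e \<in> B)" using assms by auto
  hence "w B e (n e) = 0" unfolding w_def by auto
  hence "(\<Prod>e\<in>E. w B e (n e)) = 0" using e finE by (metis prod_zero_iff)
  thus ?thesis using False by simp
qed

lemma u0: "u 0 = 1" unfolding u_def s_def by (simp add: Xp_0)

lemma w_sum:
  assumes "K \<ge> 1"
  shows "(\<Sum>k<K. w B e k) = (if e \<in> B then 1 else gs (K - 1))"
proof (cases "e \<in> B")
  case True
  have "(\<Sum>k<K. w B e k) = (\<Sum>k<K. if k = 0 then u k else 0)" unfolding w_def using True by simp
  also have "\<dots> = u 0" using assms by (simp add: sum.delta)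
  finally show ?thesis using True u0 by simp
next
  case False
  have "(\<Sum>k<K. w B e k) = (\<Sum>k<K. if k \<noteq> 0 then u k else 0)" unfolding w_def using False by (intro sum.cong) auto
  also have "\<dots> = (\<Sum>k\<in>{..<K} \<inter> {k. k \<noteq> 0}. u k)" by (simp add: sum.inter_restrict)
  also have "{..<K} \<inter> {k. k \<noteq> 0} = {1..K - 1}" using assms by auto
  also have "(\<Sum>k\<in>{1..K - 1}. u k) = gs (K - 1)" unfolding gs_def u_def s_def
    by (intro sum.cong) auto
  finally show ?thesis using False by simp
qed

lemma box_closed:
  assumes "K \<ge> 1"
  shows "(\<Sum>n\<in>Bx K. f n) = (\<Sum>B\<in>Pow E. qq ^ c B * gs (K - 1) ^ card (E - B))"
proof -
  have "(\<Sum>n\<in>Bx K. f n) = (\<Sum>n\<in>Bx K. \<Sum>B\<in>Pow E. if {e \<in> E. n e = 0} = B then (\<Prod>e\<in>E. u (n e)) * qq ^ c B else 0)"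
  proof (rule sum.cong[OF refl])
    fix n assume "n \<in> Bx K"
    have "{e \<in> E. n e = 0} \<in> Pow E" by auto
    thus "f n = (\<Sum>B\<in>Pow E. if {e \<in> E. n e = 0} = B then (\<Prod>e\<in>E. u (n e)) * qq ^ c B else 0)"
      unfolding f_prod using finE by simp
  qed
  also have "\<dots> = (\<Sum>B\<in>Pow E. \<Sum>n\<in>Bx K. if {e \<in> E. n e = 0} = B then (\<Prod>e\<in>E. u (n e)) * qq ^ c B else 0)"
    by (rule sum.swap)
  also have "\<dots> = (\<Sum>B\<in>Pow E. qq ^ c B * gs (K - 1) ^ card (E - B))"
  proof (rule sum.cong[OF refl])
    fix B assume B: "B \<in> Pow E"
    have "(\<Sum>n\<in>Bx K. if {e \<in> E. n e = 0} = B then (\<Prod>e\<in>E. u (n e)) * qq ^ c B else 0)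
        = qq ^ c B * (\<Sum>n\<in>Bx K. \<Prod>e\<in>E. w B e (n e))"
      unfolding sum_distrib_left
    proof (rule sum.cong[OF refl])
      fix n
      have "(if {e \<in> E. n e = 0} = B then (\<Prod>e\<in>E. u (n e)) * qq ^ c B else 0)
            = qq ^ c B * (if {e \<in> E. n e = 0} = B then \<Prod>e\<in>E. u (n e) else 0)" by (simp add: mult.commute)
      thus "(if {e \<in> E. n e = 0} = B then (\<Prod>e\<in>E. u (n e)) * qq ^ c B else 0) = qq ^ c B * (\<Prod>e\<in>E. w B e (n e))"
        using w_prod B by simp
    qed
    also have "(\<Sum>n\<in>Bx K. \<Prod>e\<in>E. w B e (n e)) = (\<Prod>e\<in>E. \<Sum>k<K. w B e k)"
      unfolding Bx_def by (rule prod_sum_PiE[symmetric]) (use finE in auto)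
    also have "\<dots> = (\<Prod>e\<in>E. if e \<in> B then 1 else gs (K - 1))" using w_sum[OF assms] by simp
    also have "\<dots> = gs (K - 1) ^ card (E - B)"
    proof -
      have "(\<Prod>e\<in>E. if e \<in> B then 1 else gs (K - 1)) = (\<Prod>e\<in>E - B. gs (K - 1))"
        using finE by (simp add: prod.If_cases Diff_eq)
      thus ?thesis by simp
    qed
    finally show "(\<Sum>n\<in>Bx K. if {e \<in> E. n e = 0} = B then (\<Prod>e\<in>E. u (n e)) * qq ^ c B else 0)
        = qq ^ c B * gs (K - 1) ^ card (E - B)" .
  qed
  finally show ?thesis .
qed

theorem main:
  "fls_seq_sum T = (\<Sum>B\<in>Pow E. qq ^ c B * (- inverse qq) ^ card (E - B))"
proof (rule fls_eqI)
  fix m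
  define K where "K = nat \<bar>m\<bar> + Cb + 2"
  have K1: "K \<ge> 1" and Km: "int K > m + int Cb" and Km2: "m < int K - int Cb" unfolding K_def by auto
  have "fls_seq_sum T $$ m = (\<Sum>i<K. T i) $$ m" using seq_nth[OF Km] by (simp add: fls_nth_sum)
  also have "\<dots> = (\<Sum>n\<in>Bx K. f n) $$ m" unfolding sumT using box_nth[OF Km2] by simp
  also have "\<dots> = (\<Sum>B\<in>Pow E. qq ^ c B * gs (K - 1) ^ card (E - B)) $$ m" unfolding box_closed[OF K1] ..
  also have "\<dots> = (\<Sum>B\<in>Pow E. qq ^ c B * (- inverse qq) ^ card (E - B)) $$ m"
  proof -
    let ?a = "gs (K - 1)" and ?b = "- inverse qq"
    have "lowv (- int Cb + (2 * int (K - 1) + 1))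
       ((\<Sum>B\<in>Pow E. qq ^ c B * ?a ^ card (E - B)) - (\<Sum>B\<in>Pow E. qq ^ c B * ?b ^ card (E - B)))"
      unfolding sum_subtractf[symmetric] right_diff_distrib[symmetric]
    proof (rule lowv_sum)
      fix B assume B: "B \<in> Pow E"
      have a0: "lowv 0 ?a" using lowv_gs by (rule lowv_mono[rotated]) simp
      have b0: "lowv 0 ?b" using lowv_uminus[OF lowv_inv_qq] by (rule lowv_mono[rotated]) simp
      have "lowv (- int (c B) + (2 * int (K - 1) + 1)) (qq ^ c B * (?a ^ card (E - B) - ?b ^ card (E - B)))"
        by (intro lowv_mult lowv_qq_pow lowv_pow_diff a0 b0 lowv_gs_diff)
      moreover have "c B \<le> Cb" using B c_le by auto
      ultimately show "lowv (- int Cb + (2 * int (K - 1) + 1)) (qq ^ c B * (?a ^ card (E - B) - ?b ^ card (E - B)))"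
        by (elim lowv_mono[rotated]) simp
    qed
    moreover have "m < - int Cb + (2 * int (K - 1) + 1)" unfolding K_def by auto
    ultimately show ?thesis unfolding lowv_def by auto
  qed
  finally show "fls_seq_sum T $$ m = (\<Sum>B\<in>Pow E. qq ^ c B * (- inverse qq) ^ card (E - B)) $$ m" .
qed

end

lemma bracket_sum:
  "bracket_euler_char V D vert \<alpha> \<sigma> =
     (\<Sum>B\<in>Pow (graph_edges D \<alpha>). qq ^ nbhd_circles (dual_vertices D \<alpha> \<sigma>) D (dual_vert \<alpha> \<sigma>) \<alpha> (dual_rotation \<alpha> \<sigma>) B
        * (- inverse qq) ^ card (graph_edges D \<alpha> - B))"
  if fin: "finite D"
proof -
  let ?E = "graph_edges D \<alpha>"
  let ?c = "nbhd_circles (dual_vertices D \<alpha> \<sigma>) D (dual_vert \<alpha> \<sigma>) \<alpha> (dual_rotation \<alpha> \<sigma>)"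
  have finE: "finite ?E" unfolding graph_edges_def using fin by (simp add: setcompr_eq_image)
  interpret fsum ?E ?c by unfold_locales (rule finE)
  have "spin_chain_class (dual_vertices D \<alpha> \<sigma>) D (dual_vert \<alpha> \<sigma>) \<alpha> (dual_rotation \<alpha> \<sigma>) i = (\<Sum>n\<in>st i. trm n)" for i
    unfolding spin_chain_class_def st_def spin_states_def
  proof (rule sum.cong[OF refl])
    fix n
    have "spin_summand_shift D \<alpha> n = (\<Sum>e\<in>?E. s (n e))"
      unfolding spin_summand_shift_def s_def P2_term_def by (intro sum.cong) auto
    moreover have "{e \<in> ?E. snd (P2_term (n e))} = {e \<in> ?E. n e = 0}" unfolding P2_term_def by auto
    ultimately show "fls_X powi spin_summand_shift D \<alpha> n *
         qq ^ spin_summand_circles (dual_vertices D \<alpha> \<sigma>) D (dual_vert \<alpha> \<sigma>) \<alpha> (dual_rotation \<alpha> \<sigma>) n = trm n"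
      unfolding trm_def spin_summand_circles_def Xp_powi by simp
  qed
  hence "bracket_euler_char V D vert \<alpha> \<sigma> = fls_seq_sum T"
    unfolding bracket_euler_char_def spin_euler_char_def T_def by simp
  thus ?thesis using main by simp
qed

theorem mainTheorem5:
  fixes V :: "'v set" and D :: "'d set" and vert :: "'d \<Rightarrow> 'v"
    and \<alpha> \<sigma> :: "'d \<Rightarrow> 'd"
  assumes "plane_graph V D vert \<alpha> \<sigma>"
  shows "poly (map_poly of_int (chromatic_poly V D vert \<alpha>)) (qq ^ 2) =
           qq ^ 2
           * qq powi ((\<Sum>v\<in>dual_vertices D \<alpha> \<sigma>. int (valence D (dual_vert \<alpha> \<sigma>) v) - 2) div 2)
           * bracket_euler_char V D vert \<alpha> \<sigma>"
proof -
  interpret rg V D vert \<alpha> \<sigma> using assms unfolding plane_graph_def by unfold_locales auto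
  let ?c = "nbhd_circles (dual_vertices D \<alpha> \<sigma>) D (dual_vert \<alpha> \<sigma>) \<alpha> (dual_rotation \<alpha> \<sigma>)"
  have br: "bracket_euler_char V D vert \<alpha> \<sigma> = (\<Sum>B\<in>Pow E. qq ^ ?c B * (- inverse qq) ^ card (E - B))"
    using bracket_sum finD by blast
  have lhs: "poly (map_poly of_int (chromatic_poly V D vert \<alpha>)) (qq ^ 2) = (\<Sum>S\<in>Pow E. (-1) ^ card S * (qq ^ 2) ^ kk (\<Union>S))"
    by (rule chromatic_eval)
  have qnz: "qq \<noteq> 0" by (rule qq_nz)
  show ?thesis
  proof (cases "D = {}")
    case True
    have E0: "E = {}" unfolding graph_edges_def True by simp
    have k0: "kk {} = card V"
    proof -
      have "R {} = {}" unfolding relA_def by auto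
      hence "comps V vert \<alpha> {} = (\<lambda>x. {x}) ` V" unfolding comps_def by simp
      thus ?thesis by (simp add: card_image)
    qed
    have V1: "card V = 1"
    proof -
      have "nbhd_circles V D vert \<alpha> \<sigma> E = card V" unfolding nbhd_circles_def E0 by simp
      thus ?thesis using assms E0 unfolding plane_graph_def by simp
    qed
    have DV: "dual_vertices D \<alpha> \<sigma> = {{}}" unfolding dual_vertices_def True by simp
    have val: "valence D (dual_vert \<alpha> \<sigma>) {} = 0" unfolding valence_def True by simp
    have c0: "?c {} = 1" unfolding nbhd_circles_def DV by simp
    have "qq ^ 2 * qq powi (-1) * qq = qq ^ 2"
      using qnz by (simp add: power_int_minus field_simps power2_eq_square)
    thus ?thesis unfolding lhs br E0 using DV val c0 k0 V1 by simp
  next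
    case False
    interpret pg V D vert \<alpha> \<sigma> by unfold_locales (use assms False in auto)
    let ?nV = "int (card (dual_vertices D \<alpha> \<sigma>))"
    have nV: "?nV = int (F D)"
    proof -
      have "dual_vertices D \<alpha> \<sigma> = {orbit_of (\<sigma> \<circ> \<alpha>) d | d. d \<in> D}"
        unfolding dual_vertices_def using False by simp
      hence "card (dual_vertices D \<alpha> \<sigma>) = ncyc (\<sigma> \<circ> \<alpha>) D" unfolding ncyc_def by simp
      also have "\<dots> = ncyc (\<alpha> \<circ> \<sigma>) D"
        by (rule conj_ncyc[where h = \<sigma>]) (auto simp: permutes_inj[OF sperm] permutes_image[OF sperm])
      also have "\<alpha> \<circ> \<sigma> = piA \<sigma> \<alpha> D"
      proof
        fix x show "(\<alpha> \<circ> \<sigma>) x = piA \<sigma> \<alpha> D x"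
        proof (cases "x \<in> D")
          case False
          hence "\<sigma> x = x" "\<alpha> x = x" using sperm aperm unfolding permutes_def by auto
          thus ?thesis unfolding piA_def using False by simp
        qed (simp add: piA_def)
      qed
      finally show ?thesis by simp
    qed
    have ex: "(\<Sum>v\<in>dual_vertices D \<alpha> \<sigma>. int (valence D (dual_vert \<alpha> \<sigma>) v) - 2) div 2 = int (card E) - ?nV"
      using valence_sum[OF False] cardD by simp
    have br2: "bracket_euler_char V D vert \<alpha> \<sigma> = (\<Sum>S\<in>Pow E. qq ^ F (\<Union>S) * (- inverse qq) ^ card S)"
    proof -
      have "(\<Sum>B\<in>Pow E. qq ^ ?c B * (- inverse qq) ^ card (E - B))
          = (\<Sum>S\<in>Pow E. qq ^ ?c (E - S) * (- inverse qq) ^ card (E - (E - S)))"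
      proof (rule sum.reindex_bij_witness[of _ "\<lambda>S. E - S" "\<lambda>S. E - S"])
        fix a assume a: "a \<in> Pow E"
        hence ee: "E - (E - a) = a" by auto
        show "E - (E - a) = a" by (rule ee)
        show "E - a \<in> Pow E" by auto
        show "qq ^ ?c (E - (E - a)) * (- inverse qq) ^ card (E - (E - (E - a))) = qq ^ ?c a * (- inverse qq) ^ card (E - a)"
          unfolding ee ..
      qed auto
      also have "\<dots> = (\<Sum>S\<in>Pow E. qq ^ F (\<Union>S) * (- inverse qq) ^ card S)"
      proof (rule sum.cong[OF refl])
        fix S assume S: "S \<in> Pow E"
        have "?c (E - S) = F (D - \<Union>(E - S))" by (rule dual_circ) (use False in auto)
        also have "D - \<Union>(E - S) = \<Union>S" using compl S by auto
        finally have "?c (E - S) = F (\<Union>S)" .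
        moreover have "E - (E - S) = S" using S by auto
        ultimately show "qq ^ ?c (E - S) * (- inverse qq) ^ card (E - (E - S)) = qq ^ F (\<Union>S) * (- inverse qq) ^ card S"
          by simp
      qed
      finally show ?thesis using br by simp
    qed
    have trmS: "qq ^ 2 * qq powi (int (card E) - ?nV) * (qq ^ F (\<Union>S) * (- inverse qq) ^ card S)
              = (-1) ^ card S * (qq ^ 2) ^ kk (\<Union>S)" if S: "S \<in> Pow E" for S
    proof -
      have cS: "closedA (\<Union>S)" using E_closed S by auto
      have d: "delta (\<Union>S) = 0" using delta_zero[OF cS] .
      have cU: "card (\<Union>S) = 2 * card S" using card_US S by auto
      have Fv: "int (F (\<Union>S)) = 2 * int (kk (\<Union>S)) - int (card V) + int (card S)"
        using d cU unfolding delta_def by simp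
      have eul: "int (card V) - int (card E) + int (F D) = 2" by (rule FD)
      have expo: "2 + (int (card E) - ?nV) + int (F (\<Union>S)) + - int (card S) = 2 * int (kk (\<Union>S))"
        using Fv eul nV by simp
      have "qq ^ 2 * qq powi (int (card E) - ?nV) * (qq ^ F (\<Union>S) * (- inverse qq) ^ card S)
          = (-1) ^ card S * (qq powi 2 * qq powi (int (card E) - ?nV) * qq powi (int (F (\<Union>S))) * qq powi (- int (card S)))"
      proof -
        have a1: "(- inverse qq) ^ card S = (-1) ^ card S * qq powi (- int (card S))"
        proof -
          have "(- inverse qq) ^ card S = (-1) ^ card S * inverse qq ^ card S" by (rule power_minus)
          also have "inverse qq ^ card S = inverse (qq ^ card S)" by (rule power_inverse)
          also have "\<dots> = qq powi (- int (card S))" by (simp add: power_int_minus)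
          finally show ?thesis .
        qed
        have a2: "qq ^ F (\<Union>S) = qq powi int (F (\<Union>S))" by simp
        have a3: "qq ^ 2 = qq powi 2" by simp
        show ?thesis unfolding a1 a2 a3 by (simp add: ac_simps)
      qed
      also have "qq powi 2 * qq powi (int (card E) - ?nV) * qq powi (int (F (\<Union>S))) * qq powi (- int (card S))
          = qq powi (2 + (int (card E) - ?nV) + int (F (\<Union>S)) + - int (card S))"
        by (simp only: power_int_add[OF disjI1[OF qnz]])
      also have "\<dots> = qq powi (2 * int (kk (\<Union>S)))" unfolding expo ..
      also have "\<dots> = (qq ^ 2) ^ kk (\<Union>S)" by (simp add: power_int_mult power_mult)
      finally show ?thesis .
    qed
    show ?thesis unfolding lhs ex br2 sum_distrib_left using trmS by (intro sum.cong) (auto simp: mult.assoc)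
  qed
qed


end
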